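(* For every $n,e\in\mathbb N$, consider the following code for single-bit messages on two shares $A,B$ of $n$ qubits each: $\mathrm{Enc}(0)=|\Phi\rangle\langle\Phi|^{\otimes n}_{AB}$ ($n$ EPR pairs), and $\mathrm{Enc}(1)$ is obtained by sampling $(a,b)\in\mathbb F_2^n\times\mathbb F_2^n$ uniformly conditioned on $(a,b)\neq(0^n,0^n)$ and outputting $(X^a\otimes Z^b)|\Phi\rangle^{\otimes n}$ (with $X^a$ on $A$ and $Z^b$ on $B$). $\mathrm{Dec}$ measures each of the $n$ pairs in the Bell basis, obtaining $a',b'\in\{0,1\}^n$, and outputs $0$ iff $a'=b'=0^n$, else $1$. This code is perfectly correct and is non-malleable against $\mathsf{LOCC}^2_e$ with error $2^{1+e-n}$.
   Context: For $a\in\mathbb F_2^n$, $X^a=\bigotimes_iX^{a_i}$ and $Z^a=\bigotimes_iZ^{a_i}$ are $n$-qubit Pauli operators. $\mathsf{LOCC}^2_e$ is the set of bipartite channels implementable by two parties holding the two shares using local quantum operations and unbounded classical communication, assisted by a pre-shared entangled state of at most $e$ qubits (Schmidt number at most $2^e$). A code for classical messages with quantum codewords is non-malleable against a class $\mathcal F$ of channels with error $\varepsilon$ if for every $\Lambda\in\mathcal F$ there are $p_\Lambda\in[0,1]$ and a distribution $D_\Lambda$ on messages, independent of the message, such that for every message $m$ the output distribution of $\mathrm{Dec}\circ\Lambda\circ\mathrm{Enc}(m)$ is within statistical distance $\varepsilon$ of $p_\Lambda\cdot m+(1-p_\Lambda)\cdot D_\Lambda$. *)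

theory Defs
  imports Complex_Main
begin

(* Finite-dimensional operators are represented as functions on index pairs.
   A bipartite system A (x) B with local dimensions dA, dB has basis |i>|j>,
   i < dA, j < dB; an operator on it is a function (i,j) (i',j') -> complex
   (row (i,j), column (i',j')).  Entries outside the range are ignored/zero. *)
type_synonym bop = "nat \<times> nat \<Rightarrow> nat \<times> nat \<Rightarrow> complex"
type_synonym kmat = "nat \<Rightarrow> nat \<Rightarrow> complex"
type_synonym bvec = "nat \<times> nat \<Rightarrow> complex"

(* n-qubit computational basis states are indexed by x < 2^n, bit i of x = qubit i.
   Vectors a in F_2^n are likewise encoded as naturals a < 2^n. *)

definition pauliX :: "nat \<Rightarrow> nat \<Rightarrow> kmat" where
  "pauliX n a x u = (if x < 2^n \<and> u < 2^n \<and> x = xor u a then 1 else 0)"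

definition pauliZ :: "nat \<Rightarrow> nat \<Rightarrow> kmat" where
  "pauliZ n b y u = (if y < 2^n \<and> y = u
      then (-1) ^ card {i. i < n \<and> bit b i \<and> bit u i} else 0)"

(* |Phi>^{(x) n} = 2^{-n/2} sum_x |x>_A |x>_B  (qubit i of A paired with qubit i of B) *)
definition epr_n :: "nat \<Rightarrow> bvec" where
  "epr_n n = (\<lambda>(x, y). if x < 2^n \<and> x = y
       then 1 / complex_of_real (sqrt (2^n)) else 0)"

definition bell :: "nat \<Rightarrow> nat \<Rightarrow> nat \<Rightarrow> bvec" where
  "bell n a b = (\<lambda>(x, y). \<Sum>u<2^n. \<Sum>v<2^n. pauliX n a x u * pauliZ n b y v * epr_n n (u, v))"

definition proj :: "bvec \<Rightarrow> bop" where
  "proj v p q = v p * cnj (v q)"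

definition nz_pairs :: "nat \<Rightarrow> (nat \<times> nat) set" where
  "nz_pairs n = ({..<2^n} \<times> {..<2^n}) - {(0, 0)}"

(* messages: False = 0, True = 1 *)
definition enc :: "nat \<Rightarrow> bool \<Rightarrow> bop" where
  "enc n m = (if m
     then (\<lambda>p q. (\<Sum>(a, b)\<in>nz_pairs n. proj (bell n a b) p q) / of_nat (card (nz_pairs n)))
     else proj (epr_n n))"

definition bellprob :: "nat \<Rightarrow> bop \<Rightarrow> nat \<Rightarrow> nat \<Rightarrow> real" where
  "bellprob n \<sigma> a b = Re (\<Sum>p\<in>{..<2^n} \<times> {..<2^n}. \<Sum>q\<in>{..<2^n} \<times> {..<2^n}.
       cnj (bell n a b p) * \<sigma> p q * bell n a b q)"

definition dec_dist :: "nat \<Rightarrow> bop \<Rightarrow> bool \<Rightarrow> real" where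
  "dec_dist n \<sigma> m = (if m then (\<Sum>(a, b)\<in>nz_pairs n. bellprob n \<sigma> a b) else bellprob n \<sigma> 0 0)"

definition apply_krausA :: "kmat list \<Rightarrow> nat \<Rightarrow> nat \<Rightarrow> nat \<Rightarrow> bop \<Rightarrow> bop" where
  "apply_krausA Ks dA dA' dB \<rho> = (\<lambda>(i, j) (i', j').
     if i < dA' \<and> i' < dA' \<and> j < dB \<and> j' < dB
     then (\<Sum>K\<leftarrow>Ks. \<Sum>x<dA. \<Sum>y<dA. K i x * \<rho> (x, j) (y, j') * cnj (K i' y))
     else 0)"

definition apply_krausB :: "kmat list \<Rightarrow> nat \<Rightarrow> nat \<Rightarrow> nat \<Rightarrow> bop \<Rightarrow> bop" where
  "apply_krausB Ks dA dB dB' \<rho> = (\<lambda>(i, j) (i', j').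
     if i < dA \<and> i' < dA \<and> j < dB' \<and> j' < dB'
     then (\<Sum>K\<leftarrow>Ks. \<Sum>x<dB. \<Sum>y<dB. K j x * \<rho> (i, x) (i', y) * cnj (K j' y))
     else 0)"

(* a quantum instrument from dimension d to d': finitely many CP maps (Kraus lists),
   jointly trace preserving: sum_k sum_{K in I!k} K^* K = Id *)
definition instrument :: "kmat list list \<Rightarrow> nat \<Rightarrow> nat \<Rightarrow> bool" where
  "instrument I d d' \<longleftrightarrow> (\<forall>x<d. \<forall>y<d.
     (\<Sum>Ks\<leftarrow>I. \<Sum>K\<leftarrow>Ks. \<Sum>i<d'. cnj (K i x) * K i y) = (if x = y then 1 else 0))"

(* finite-round LOCC channels from dims (dA,dB) to (dA',dB'): in each round one party
   applies a local instrument, broadcasts the outcome, and the rest of the protocol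
   depends on it. *)
inductive locc :: "nat \<Rightarrow> nat \<Rightarrow> nat \<Rightarrow> nat \<Rightarrow> (bop \<Rightarrow> bop) \<Rightarrow> bool" where
  locc_id: "locc dA dB dA dB (\<lambda>\<rho>. \<rho>)"
| locc_A: "instrument I dA dA'' \<Longrightarrow> (\<forall>k<length I. locc dA'' dB dA' dB' (\<Phi> k)) \<Longrightarrow>
     locc dA dB dA' dB' (\<lambda>\<rho> p q. \<Sum>k<length I. \<Phi> k (apply_krausA (I ! k) dA dA'' dB \<rho>) p q)"
| locc_B: "instrument I dB dB'' \<Longrightarrow> (\<forall>k<length I. locc dA dB'' dA' dB' (\<Phi> k)) \<Longrightarrow>
     locc dA dB dA' dB' (\<lambda>\<rho> p q. \<Sum>k<length I. \<Phi> k (apply_krausB (I ! k) dA dB dB'' \<rho>) p q)"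

definition schmidt_rank_le :: "nat \<Rightarrow> nat \<Rightarrow> nat \<Rightarrow> bvec \<Rightarrow> bool" where
  "schmidt_rank_le k dA dB \<psi> \<longleftrightarrow>
     (\<exists>u v. \<forall>x<dA. \<forall>y<dB. \<psi> (x, y) = (\<Sum>l<k. u l x * v l y))"

(* a shared state on E_A (x) E_B of Schmidt number at most 2^e:
   a convex combination of pure states of Schmidt rank at most 2^e *)
definition resource_state :: "nat \<Rightarrow> nat \<Rightarrow> nat \<Rightarrow> bop \<Rightarrow> bool" where
  "resource_state e dA dB \<omega> \<longleftrightarrow> (\<exists>J (w :: nat \<Rightarrow> real) \<psi>.
     (\<forall>j<J. w j \<ge> 0) \<and> (\<Sum>j<J. w j) = 1 \<and>
     (\<forall>j<J. (\<Sum>x<dA. \<Sum>y<dB. (cmod (\<psi> j (x, y)))\<^sup>2) = 1 \<and> schmidt_rank_le (2^e) dA dB (\<psi> j)) \<and>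
     (\<forall>p q. \<omega> p q = (\<Sum>j<J. complex_of_real (w j) * proj (\<psi> j) p q)))"

(* rho on A (x) B (n qubits each) tensored with omega on E_A (x) E_B, regrouped as
   (A E_A) (x) (B E_B), index of A E_A is a * dEA + ea *)
definition attach :: "nat \<Rightarrow> nat \<Rightarrow> nat \<Rightarrow> bop \<Rightarrow> bop \<Rightarrow> bop" where
  "attach n dEA dEB \<omega> \<rho> = (\<lambda>(i, j) (i', j').
     if i < 2^n * dEA \<and> i' < 2^n * dEA \<and> j < 2^n * dEB \<and> j' < 2^n * dEB
     then \<rho> (i div dEA, j div dEB) (i' div dEA, j' div dEB)
          * \<omega> (i mod dEA, j mod dEB) (i' mod dEA, j' mod dEB)
     else 0)"

definition LOCC2 :: "nat \<Rightarrow> nat \<Rightarrow> (bop \<Rightarrow> bop) set" where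
  "LOCC2 n e = {\<Lambda>. \<exists>dEA dEB \<omega> \<Phi>. resource_state e dEA dEB \<omega> \<and>
      locc (2^n * dEA) (2^n * dEB) (2^n) (2^n) \<Phi> \<and>
      \<Lambda> = (\<lambda>\<rho>. \<Phi> (attach n dEA dEB \<omega> \<rho>))}"

definition is_dist :: "(bool \<Rightarrow> real) \<Rightarrow> bool" where
  "is_dist D \<longleftrightarrow> (\<forall>x. D x \<ge> 0) \<and> D False + D True = 1"

definition stat_dist :: "(bool \<Rightarrow> real) \<Rightarrow> (bool \<Rightarrow> real) \<Rightarrow> real" where
  "stat_dist P Q = (\<bar>P False - Q False\<bar> + \<bar>P True - Q True\<bar>) / 2"

definition non_malleable :: "nat \<Rightarrow> (bop \<Rightarrow> bop) set \<Rightarrow> real \<Rightarrow> bool" where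
  "non_malleable n F \<epsilon> \<longleftrightarrow> (\<forall>\<Lambda>\<in>F. \<exists>p D. 0 \<le> p \<and> p \<le> 1 \<and> is_dist D \<and>
     (\<forall>m. stat_dist (dec_dist n (\<Lambda> (enc n m)))
                     (\<lambda>x. p * (if x = m then 1 else 0) + (1 - p) * D x) \<le> \<epsilon>))"

definition perfectly_correct :: "nat \<Rightarrow> bool" where
  "perfectly_correct n \<longleftrightarrow> (\<forall>m. dec_dist n (enc n m) = (\<lambda>x. if x = m then 1 else 0))"

end

theory Submission
  imports Defs "HOL-Analysis.Analysis"
begin


lemma xor_lt: "(x::nat) < 2^n \<Longrightarrow> y < 2^n \<Longrightarrow> xor x y < 2^n"
  by (metis take_bit_nat_eq_self_iff take_bit_xor)

definition chi :: "nat \<Rightarrow> nat \<Rightarrow> nat \<Rightarrow> complex" where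
  "chi n b y = (-1) ^ card {i. i < n \<and> bit b i \<and> bit y i}"

lemma chi_sym: "chi n b y = chi n y b"
  unfolding chi_def by (metis (no_types, lifting) Collect_cong)

lemma chi_zero[simp]: "chi n 0 y = 1"
  unfolding chi_def by simp

lemma chi_sq: "chi n b y * chi n b y = 1"
proof -
  have "(-1::complex)^k * (-1)^k = ((-1)*(-1))^k" for k by (rule power_mult_distrib[symmetric])
  then show ?thesis unfolding chi_def by simp
qed

lemma cnj_chi[simp]: "cnj (chi n b y) = chi n b y"
  unfolding chi_def by simp

lemma chi_mult: "chi n b y * chi n b y' = chi n b (xor y y')"
proof -
  let ?A = "{i. i < n \<and> bit b i \<and> bit y i}"
  let ?B = "{i. i < n \<and> bit b i \<and> bit y' i}"
  let ?C = "{i. i < n \<and> bit b i \<and> bit (xor y y') i}"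
  have fA: "finite ?A" "finite ?B" "finite (?A \<inter> ?B)" by auto
  have C: "?C = (?A - ?B) \<union> (?B - ?A)" by (auto simp: bit_xor_iff)
  have "card ?C = card (?A - ?B) + card (?B - ?A)"
    unfolding C by (rule card_Un_disjoint) auto
  moreover have "card ?A = card (?A - ?B) + card (?A \<inter> ?B)"
  proof -
    have "?A = (?A - ?B) \<union> (?A \<inter> ?B)" by blast
    then have "card ?A = card ((?A - ?B) \<union> (?A \<inter> ?B))" by simp
    also have "\<dots> = card (?A - ?B) + card (?A \<inter> ?B)" by (rule card_Un_disjoint) auto
    finally show ?thesis .
  qed
  moreover have "card ?B = card (?B - ?A) + card (?A \<inter> ?B)"
  proof -
    have "?B = (?B - ?A) \<union> (?A \<inter> ?B)" by blast
    then have "card ?B = card ((?B - ?A) \<union> (?A \<inter> ?B))" by simp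
    also have "\<dots> = card (?B - ?A) + card (?A \<inter> ?B)" by (rule card_Un_disjoint) auto
    finally show ?thesis .
  qed
  ultimately have "card ?A + card ?B = card ?C + 2 * card (?A \<inter> ?B)" by simp
  moreover have "(-1::complex)^(a + 2*c) = (-1)^a" for a c :: nat by (simp add: power_add power_mult)
  ultimately have "(-1::complex)^(card ?A + card ?B) = (-1)^card ?C" by simp
  then show ?thesis unfolding chi_def by (simp add: power_add)
qed

lemma chi_exp: "j < n \<Longrightarrow> bit c j \<Longrightarrow> chi n c (2^j) = -1"
proof -
  assume a: "j < n" "bit c j"
  have "{i. i < n \<and> bit c i \<and> bit ((2::nat)^j) i} = {j}" using a by (auto simp: bit_exp_iff)
  then show ?thesis unfolding chi_def by simp
qed

lemma chi_sum: assumes "c < 2^n" shows "(\<Sum>y<2^n. chi n c y) = (if c = 0 then 2^n else 0)"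
proof (cases "c = 0")
  case True then show ?thesis by simp
next
  case False
  have "\<not>(\<forall>j. \<not> bit c j)" using False bit_eq_iff[of c 0] by auto
  then obtain j where j: "bit c j" by blast
  have "take_bit n c = c" using assms by (simp add: take_bit_nat_eq_self_iff)
  then have jn: "j < n" using j by (metis bit_take_bit_iff)
  let ?S = "\<Sum>y<2^n. chi n c y"
  have xl: "(2::nat)^j < 2^n" using jn by simp
  have "?S = (\<Sum>y<2^n. chi n c (xor y (2^j)))"
    by (rule sum.reindex_bij_witness[of _ "\<lambda>y. xor y (2^j)" "\<lambda>y. xor y (2^j)"])
       (auto simp: xor_lt xl xor.assoc)
  also have "\<dots> = (\<Sum>y<2^n. - chi n c y)"
  proof (rule sum.cong[OF refl])
    fix y
    have "chi n c (xor y (2^j)) = chi n c y * chi n c (2^j)" by (simp add: chi_mult)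
    then show "chi n c (xor y (2^j)) = - chi n c y" by (simp add: chi_exp[OF jn j])
  qed
  finally have "?S = - ?S" by (simp add: sum_negf)
  then show ?thesis using False by simp
qed


abbreviation sN :: "nat \<Rightarrow> complex" where "sN n \<equiv> complex_of_real (sqrt (2^n))"

lemma xor_cancel: "xor y (xor y a) = (a::nat)"
  by (simp flip: xor.assoc)

lemma eq_xor_iff: "(x = xor y a) \<longleftrightarrow> (a = xor y (x::nat))"
proof
  assume "x = xor y a" then show "a = xor y x" by (simp add: xor_cancel)
next
  assume "a = xor y x" then show "x = xor y a" by (simp add: xor_cancel)
qed

lemma xor_eq0: "xor b b' = 0 \<longleftrightarrow> b = (b'::nat)"
proof
  assume "xor b b' = 0"
  then have "xor b' (xor b' b) = xor b' 0" by (simp add: xor.commute)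
  then show "b = b'" by (simp only: xor_cancel) simp
qed simp

lemma sN_sq: "sN n * sN n = 2^n"
proof -
  have "sqrt (2^n) * sqrt (2^n) = (2::real)^n" by simp
  then have "complex_of_real (sqrt (2^n) * sqrt (2^n)) = 2^n" by simp
  then show ?thesis by (simp only: of_real_mult)
qed

lemma cnj_sN[simp]: "cnj (sN n) = sN n" by simp

lemma sN_nz: "sN n \<noteq> 0" by simp

lemma chi_mult2: "chi n y b * chi n y' b = chi n (xor y y') b"
  by (simp add: chi_sym[of n y b] chi_sym[of n y' b] chi_sym[of n "xor y y'" b] chi_mult)

lemma chi_pair_sum: assumes "y < 2^n" "y' < 2^n"
  shows "(\<Sum>b<2^n. chi n b y * chi n b y') = (if y = y' then 2^n else 0)"
proof -
  have "(\<Sum>b<2^n. chi n b y * chi n b y') = (\<Sum>b<2^n. chi n (xor y y') b)"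
    by (rule sum.cong[OF refl]) (simp add: chi_sym[of n _ y] chi_sym[of n _ y'] chi_mult2)
  also have "\<dots> = (if y = y' then 2^n else 0)"
    using chi_sum[OF xor_lt[OF assms]] by (simp add: xor_eq0)
  finally show ?thesis .
qed






lemma bell_formula: "bell n a b (x, y) =
   (if x < 2^n \<and> y < 2^n \<and> x = xor y a then chi n b y / sN n else 0)"
proof -
  have Z: "pauliZ n b y v = (if v = y then (if y < 2^n then chi n b y else 0) else 0)" for v
    unfolding pauliZ_def chi_def by auto
  have E: "epr_n n (u,v) = (if v = u then (if u<2^n then 1 / sN n else 0) else 0)" for u v
    unfolding epr_n_def by auto
  have "bell n a b (x, y) = (\<Sum>u<2^n. \<Sum>v<2^n. pauliX n a x u * pauliZ n b y v * epr_n n (u, v))"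
    unfolding bell_def by simp
  also have "\<dots> = (\<Sum>u<2^n. if y < 2^n then pauliX n a x u * chi n b y * epr_n n (u, y) else 0)"
  proof (rule sum.cong[OF refl])
    fix u
    have "pauliX n a x u * pauliZ n b y v * epr_n n (u, v) = (if v = y then 
       (if y < 2^n then pauliX n a x u * chi n b y * epr_n n (u, y) else 0) else 0)" for v
      by (simp add: Z)
    then show "(\<Sum>v<2^n. pauliX n a x u * pauliZ n b y v * epr_n n (u, v)) =
       (if y < 2^n then pauliX n a x u * chi n b y * epr_n n (u, y) else 0)"
      by (simp add: sum.delta)
  qed
  also have "\<dots> = (if y < 2^n then pauliX n a x y * chi n b y * (1 / sN n) else 0)"
  proof -
    have "(if y < 2^n then pauliX n a x u * chi n b y * epr_n n (u, y) else 0) =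
       (if u = y then (if y < 2^n then pauliX n a x y * chi n b y * (1 / sN n) else 0) else 0)" for u
      by (simp add: E)
    then show ?thesis by (simp add: sum.delta)
  qed
  also have "\<dots> = (if x < 2^n \<and> y < 2^n \<and> x = xor y a then chi n b y / sN n else 0)"
    unfolding pauliX_def by auto
  finally show ?thesis .
qed

lemma epr_bell: "epr_n n = bell n 0 0"
  by (rule ext) (auto simp: bell_formula epr_n_def)


definition R :: "nat \<Rightarrow> (nat \<times> nat) set" where "R n = {..<2^n} \<times> {..<2^n}"

lemma finite_R[simp]: "finite (R n)" by (simp add: R_def)

lemma sum_R: "(\<Sum>p\<in>R n. f p) = (\<Sum>x<2^n. \<Sum>y<2^n. f (x, y))"
  unfolding R_def by (simp add: sum.cartesian_product)

lemma bell_ortho: assumes "a < 2^n" "a' < 2^n" "b < 2^n" "b' < 2^n"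
  shows "(\<Sum>p\<in>R n. cnj (bell n a b p) * bell n a' b' p) = (if a = a' \<and> b = b' then 1 else 0)"
proof -
  have inner: "(\<Sum>x<2^n. cnj (bell n a b (x, y)) * bell n a' b' (x, y)) =
      (if a = a' then chi n b y * chi n b' y / 2^n else 0)" if y: "y < 2^n" for y
  proof -
    have "cnj (bell n a b (x, y)) * bell n a' b' (x, y) = (if x = xor y a then
        (if a = a' then chi n b y * chi n b' y / 2^n else 0) else 0)" if "x < 2^n" for x
    proof (cases "x = xor y a")
      case True
      have e: "(xor y a = xor y a') = (a = a')"
      proof
        assume "xor y a = xor y a'"
        then have "xor y (xor y a) = xor y (xor y a')" by simp
        then show "a = a'" by (simp only: xor_cancel)
      qed simp
      have "cnj (bell n a b (x, y)) * bell n a' b' (x, y) =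
          (if a = a' then chi n b y / sN n * (chi n b' y / sN n) else 0)"
        using True that y e by (simp add: bell_formula)
      also have "\<dots> = (if a = a' then chi n b y * chi n b' y / 2^n else 0)"
      proof -
        have "chi n b y / sN n * (chi n b' y / sN n) = chi n b y * chi n b' y / (sN n * sN n)"
          by simp
        then show ?thesis by (simp only: sN_sq)
      qed
      finally show ?thesis using True by simp
    qed (simp add: bell_formula)
    then have "(\<Sum>x<2^n. cnj (bell n a b (x, y)) * bell n a' b' (x, y)) =
      (\<Sum>x<2^n. (if x = xor y a then (if a = a' then chi n b y * chi n b' y / 2^n else 0) else 0))"
      by (intro sum.cong) auto
    also have "\<dots> = (if a = a' then chi n b y * chi n b' y / 2^n else 0)"
      using xor_lt[OF y assms(1)] by (simp add: sum.delta')
    finally show ?thesis .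
  qed
  have "(\<Sum>p\<in>R n. cnj (bell n a b p) * bell n a' b' p) =
     (\<Sum>y<2^n. \<Sum>x<2^n. cnj (bell n a b (x, y)) * bell n a' b' (x, y))"
    unfolding sum_R by (rule sum.swap)
  also have "\<dots> = (\<Sum>y<2^n. if a = a' then chi n b y * chi n b' y / 2^n else 0)"
    by (intro sum.cong) (auto simp: inner)
  also have "\<dots> = (if a = a' \<and> b = b' then 1 else 0)"
  proof -
    have "(\<Sum>y<2^n. chi n b y * chi n b' y) = (if b = b' then 2^n else 0)"
    proof -
      have "(\<Sum>y<2^n. chi n b y * chi n b' y) = (\<Sum>y<2^n. chi n y b * chi n y b')"
        by (simp only: chi_sym[of n b] chi_sym[of n b'])
      then show ?thesis using chi_pair_sum[of b n b'] assms by simp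
    qed
    then show ?thesis by (cases "a = a'") (simp_all add: sum_divide_distrib[symmetric])
  qed
  finally show ?thesis .
qed


lemma xor_inj: "(xor y a = xor y a') = (a = (a'::nat))"
proof
  assume "xor y a = xor y a'"
  then have "xor y (xor y a) = xor y (xor y a')" by simp
  then show "a = a'" by (simp only: xor_cancel)
qed simp

lemma bell_compl: assumes "p \<in> R n" "q \<in> R n"
  shows "(\<Sum>a<2^n. \<Sum>b<2^n. bell n a b p * cnj (bell n a b q)) = (if p = q then 1 else 0)"
proof -
  obtain x y x' y' where pq: "p = (x, y)" "q = (x', y')" by (cases p, cases q) auto
  have r: "x < 2^n" "y < 2^n" "x' < 2^n" "y' < 2^n" using assms pq by (auto simp: R_def)
  define c where "c = xor y x"
  define c' where "c' = xor y' x'"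
  have cl: "c < 2^n" using r by (simp add: c_def xor_lt)
  define g where "g b = (if c = c' then chi n b y * chi n b y' / 2^n else 0)" for b
  have t: "bell n a b p * cnj (bell n a b q) = (if a = c then g b else 0)" if "a < 2^n" for a b
  proof (cases "a = c")
    case True
    have e1: "x = xor y a" using True by (simp add: c_def xor_cancel)
    have e2: "(x' = xor y' a) = (c = c')" using True by (auto simp: c'_def xor_cancel)
    have "bell n a b p * cnj (bell n a b q) = 
       (if c = c' then chi n b y / sN n * (chi n b y' / sN n) else 0)"
      using pq r that e1 e2 by (simp add: bell_formula)
    also have "\<dots> = g b"
    proof -
      have "chi n b y / sN n * (chi n b y' / sN n) = chi n b y * chi n b y' / (sN n * sN n)"
        by simp
      then show ?thesis unfolding g_def by (simp only: sN_sq)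
    qed
    finally show ?thesis using True by simp
  next
    case False
    then have "x \<noteq> xor y a" by (auto simp: c_def xor_cancel)
    then show ?thesis using False pq by (simp add: bell_formula)
  qed
  have "(\<Sum>a<2^n. \<Sum>b<2^n. bell n a b p * cnj (bell n a b q)) =
        (\<Sum>a<2^n. \<Sum>b<2^n. (if a = c then g b else 0))"
    by (intro sum.cong refl) (simp add: t)
  also have "\<dots> = (\<Sum>a<2^n. if a = c then (\<Sum>b<2^n. g b) else 0)"
    by (intro sum.cong refl) simp
  also have "\<dots> = (\<Sum>b<2^n. g b)"
    using cl by (simp add: sum.delta)
  also have "\<dots> = (if c = c' \<and> y = y' then 1 else 0)"
    unfolding g_def using chi_pair_sum[OF r(2) r(4)]
    by (cases "c = c'") (simp_all add: sum_divide_distrib[symmetric])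
  also have "\<dots> = (if p = q then 1 else 0)"
    using pq by (auto simp: c_def c'_def xor_inj)
  finally show ?thesis .
qed




definition ip :: "nat \<Rightarrow> bvec \<Rightarrow> bvec \<Rightarrow> complex" where
  "ip n \<phi> \<psi> = (\<Sum>p\<in>R n. cnj (\<phi> p) * \<psi> p)"

definition quad :: "nat \<Rightarrow> bvec \<Rightarrow> bop \<Rightarrow> complex" where
  "quad n \<phi> \<sigma> = (\<Sum>p\<in>R n. \<Sum>q\<in>R n. cnj (\<phi> p) * \<sigma> p q * \<phi> q)"

lemma bellprob_quad: "bellprob n \<sigma> a b = Re (quad n (bell n a b) \<sigma>)"
  unfolding bellprob_def quad_def R_def ..

lemma quad_proj: "quad n \<phi> (proj \<psi>) = ip n \<phi> \<psi> * cnj (ip n \<phi> \<psi>)"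
  unfolding quad_def proj_def ip_def
  by (simp add: sum_distrib_left sum_distrib_right mult.assoc mult.left_commute mult.commute)

lemma quad_sum: "quad n \<phi> (\<lambda>p q. \<Sum>i\<in>I. f i p q) = (\<Sum>i\<in>I. quad n \<phi> (f i))"
  unfolding quad_def
  by (simp add: sum_distrib_left sum_distrib_right sum.swap[of _ I] )

lemma quad_div: "quad n \<phi> (\<lambda>p q. \<sigma> p q / c) = quad n \<phi> \<sigma> / c"
  unfolding quad_def by (simp add: sum_divide_distrib)

lemma ip_bell: "a < 2^n \<Longrightarrow> a' < 2^n \<Longrightarrow> b < 2^n \<Longrightarrow> b' < 2^n \<Longrightarrow>
   ip n (bell n a b) (bell n a' b') = (if a = a' \<and> b = b' then 1 else 0)"
  unfolding ip_def by (rule bell_ortho)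

lemma nz_mem: "(a, b) \<in> nz_pairs n \<longleftrightarrow> a < 2^n \<and> b < 2^n \<and> (a, b) \<noteq> (0, 0)"
  unfolding nz_pairs_def by auto

lemma finite_nz[simp]: "finite (nz_pairs n)" unfolding nz_pairs_def by simp

lemma card_nz_pos: "n \<ge> 1 \<Longrightarrow> card (nz_pairs n) > 0"
proof -
  assume "n \<ge> 1"
  then have "(2::nat)^1 \<le> 2^n" by (intro power_increasing) auto
  then have "(1::nat) < 2^n" by simp
  then have "(1, 0) \<in> nz_pairs n" by (simp add: nz_mem)
  then show ?thesis using finite_nz card_gt_0_iff by blast
qed

lemma bellprob_enc0: "a < 2^n \<Longrightarrow> b < 2^n \<Longrightarrow> bellprob n (enc n False) a b = (if a = 0 \<and> b = 0 then 1 else 0)"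
  by (simp add: enc_def bellprob_quad quad_proj epr_bell ip_bell)

lemma bellprob_enc1: assumes "n \<ge> 1" "a < 2^n" "b < 2^n"
  shows "bellprob n (enc n True) a b = (if (a, b) \<in> nz_pairs n then 1 / card (nz_pairs n) else 0)"
proof -
  have "quad n (bell n a b) (enc n True) =
     (\<Sum>i\<in>nz_pairs n. quad n (bell n a b) (proj (bell n (fst i) (snd i)))) / of_nat (card (nz_pairs n))"
    unfolding enc_def by (simp add: quad_div quad_sum case_prod_beta)
  also have "\<dots> = (\<Sum>i\<in>nz_pairs n. if i = (a, b) then 1 else 0) / of_nat (card (nz_pairs n))"
    by (intro arg_cong2[where f="(/)"] sum.cong refl)
       (auto simp: quad_proj ip_bell assms nz_mem split: if_splits)
  also have "\<dots> = (if (a, b) \<in> nz_pairs n then 1 / card (nz_pairs n) else 0)"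
    by (simp add: sum.delta')
  finally show ?thesis by (simp add: bellprob_quad)
qed

lemma correct: assumes "n \<ge> 1" shows "perfectly_correct n"
  unfolding perfectly_correct_def
proof (intro allI ext)
  fix m x
  have z: "(0::nat) < 2^n" by simp
  show "dec_dist n (enc n m) x = (if x = m then 1 else 0)"
  proof (cases m)
    case True
    have "(\<Sum>(a, b)\<in>nz_pairs n. bellprob n (enc n True) a b) = (\<Sum>i\<in>nz_pairs n. 1 / card (nz_pairs n))"
    proof (intro sum.cong refl)
      fix i assume i: "i \<in> nz_pairs n"
      obtain a b where ab: "i = (a, b)" by (cases i) auto
      have "a < 2^n" "b < 2^n" using i ab by (auto simp: nz_mem)
      then show "(case i of (a, b) \<Rightarrow> bellprob n (enc n True) a b) = 1 / card (nz_pairs n)"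
        using bellprob_enc1[OF assms, of a b] i ab by simp
    qed
    also have "\<dots> = 1" using card_nz_pos[OF assms] by (simp add: card_gt_0_iff)
    finally show ?thesis using True
      using bellprob_enc1[OF assms, of 0 0] by (auto simp: dec_dist_def nz_mem)
  next
    case False
    have "(\<Sum>(a, b)\<in>nz_pairs n. bellprob n (enc n False) a b) = (\<Sum>i\<in>nz_pairs n. 0)"
      by (intro sum.cong refl) (auto simp: bellprob_enc0 nz_mem)
    then show ?thesis using False
      by (auto simp: dec_dist_def bellprob_enc0)
  qed
qed




lemma sl_sum_swap: "(\<Sum>K\<leftarrow>Ks. \<Sum>x\<in>A. f K x) = (\<Sum>x\<in>A. \<Sum>K\<leftarrow>Ks. f K x)"
  by (induction Ks) (simp_all add: sum.distrib)

lemma sl_add: "(\<Sum>K\<leftarrow>Ks. f K + g K) = (\<Sum>K\<leftarrow>Ks. f K) + (\<Sum>K\<leftarrow>Ks. (g K :: 'a::comm_monoid_add))"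
  by (induction Ks) (simp_all add: algebra_simps)

lemma sl_mult: "(\<Sum>K\<leftarrow>Ks. c * f K) = c * (\<Sum>K\<leftarrow>Ks. (f K :: 'a::comm_semiring_0))"
  by (induction Ks) (simp_all add: algebra_simps)

lemma sl_sum_nth: "(\<Sum>k<length I. f (I ! k)) = (\<Sum>Ks\<leftarrow>I. f Ks)"
  by (simp add: sum_list_sum_nth atLeast0LessThan)

definition lin_map :: "(bop \<Rightarrow> bop) \<Rightarrow> bool" where
  "lin_map \<Phi> \<longleftrightarrow> (\<forall>\<rho>1 \<rho>2. \<Phi> (\<lambda>p q. \<rho>1 p q + \<rho>2 p q) = (\<lambda>p q. \<Phi> \<rho>1 p q + \<Phi> \<rho>2 p q)) \<and>
     (\<forall>c \<rho>. \<Phi> (\<lambda>p q. c * \<rho> p q) = (\<lambda>p q. c * \<Phi> \<rho> p q))"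

lemma krausA_add: "apply_krausA Ks dA dA' dB (\<lambda>p q. \<rho>1 p q + \<rho>2 p q) =
   (\<lambda>p q. apply_krausA Ks dA dA' dB \<rho>1 p q + apply_krausA Ks dA dA' dB \<rho>2 p q)"
proof (intro ext)
  fix p q :: "nat \<times> nat"
  obtain i j i' j' where "p = (i, j)" "q = (i', j')" by (cases p, cases q) auto
  then show "apply_krausA Ks dA dA' dB (\<lambda>p q. \<rho>1 p q + \<rho>2 p q) p q =
     apply_krausA Ks dA dA' dB \<rho>1 p q + apply_krausA Ks dA dA' dB \<rho>2 p q"
    by (simp add: apply_krausA_def distrib_left distrib_right sum.distrib sl_add)
qed

lemma krausA_mult: "apply_krausA Ks dA dA' dB (\<lambda>p q. c * \<rho> p q) =
   (\<lambda>p q. c * apply_krausA Ks dA dA' dB \<rho> p q)"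
proof (intro ext)
  fix p q :: "nat \<times> nat"
  have e: "K * (c * r) * z = c * (K * r * z)" for K r z :: complex by (simp add: ac_simps)
  obtain i j i' j' where "p = (i, j)" "q = (i', j')" by (cases p, cases q) auto
  then show "apply_krausA Ks dA dA' dB (\<lambda>p q. c * \<rho> p q) p q = c * apply_krausA Ks dA dA' dB \<rho> p q"
    by (simp add: apply_krausA_def e sum_distrib_left[symmetric] sl_mult)
qed

lemma krausB_add: "apply_krausB Ks dA dB dB' (\<lambda>p q. \<rho>1 p q + \<rho>2 p q) =
   (\<lambda>p q. apply_krausB Ks dA dB dB' \<rho>1 p q + apply_krausB Ks dA dB dB' \<rho>2 p q)"
proof (intro ext)
  fix p q :: "nat \<times> nat"
  obtain i j i' j' where "p = (i, j)" "q = (i', j')" by (cases p, cases q) auto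
  then show "apply_krausB Ks dA dB dB' (\<lambda>p q. \<rho>1 p q + \<rho>2 p q) p q =
     apply_krausB Ks dA dB dB' \<rho>1 p q + apply_krausB Ks dA dB dB' \<rho>2 p q"
    by (simp add: apply_krausB_def distrib_left distrib_right sum.distrib sl_add)
qed

lemma krausB_mult: "apply_krausB Ks dA dB dB' (\<lambda>p q. c * \<rho> p q) =
   (\<lambda>p q. c * apply_krausB Ks dA dB dB' \<rho> p q)"
proof (intro ext)
  fix p q :: "nat \<times> nat"
  have e: "K * (c * r) * z = c * (K * r * z)" for K r z :: complex by (simp add: ac_simps)
  obtain i j i' j' where "p = (i, j)" "q = (i', j')" by (cases p, cases q) auto
  then show "apply_krausB Ks dA dB dB' (\<lambda>p q. c * \<rho> p q) p q = c * apply_krausB Ks dA dB dB' \<rho> p q"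
    by (simp add: apply_krausB_def e sum_distrib_left[symmetric] sl_mult)
qed

lemma locc_lin: "locc dA dB dA' dB' \<Phi> \<Longrightarrow> lin_map \<Phi>"
proof (induction rule: locc.induct)
  case (locc_id dA dB)
  then show ?case by (simp add: lin_map_def)
next
  case (locc_A I dA dA'' dB dA' dB' \<Phi>)
  have l: "lin_map (\<Phi> k)" if "k < length I" for k using locc_A.IH that by blast
  show ?case unfolding lin_map_def
  proof (intro conjI allI)
    fix \<rho>1 \<rho>2
    show "(\<lambda>\<rho> p q. \<Sum>k<length I. \<Phi> k (apply_krausA (I ! k) dA dA'' dB \<rho>) p q) (\<lambda>p q. \<rho>1 p q + \<rho>2 p q) =
      (\<lambda>p q. (\<lambda>\<rho> p q. \<Sum>k<length I. \<Phi> k (apply_krausA (I ! k) dA dA'' dB \<rho>) p q) \<rho>1 p q +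
             (\<lambda>\<rho> p q. \<Sum>k<length I. \<Phi> k (apply_krausA (I ! k) dA dA'' dB \<rho>) p q) \<rho>2 p q)"
    proof -
      have a1: "\<Phi> k (apply_krausA (I ! k) dA dA'' dB (\<lambda>p q. \<rho>1 p q + \<rho>2 p q)) =
        (\<lambda>p q. \<Phi> k (apply_krausA (I ! k) dA dA'' dB \<rho>1) p q + \<Phi> k (apply_krausA (I ! k) dA dA'' dB \<rho>2) p q)"
        if "k < length I" for k using l[OF that] by (simp add: krausA_add lin_map_def)
      have "(\<Sum>k<length I. \<Phi> k (apply_krausA (I ! k) dA dA'' dB (\<lambda>p q. \<rho>1 p q + \<rho>2 p q)) p q) =
        (\<Sum>k<length I. \<Phi> k (apply_krausA (I ! k) dA dA'' dB \<rho>1) p q + \<Phi> k (apply_krausA (I ! k) dA dA'' dB \<rho>2) p q)" for p q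
        by (intro sum.cong refl) (simp add: a1)
      then show ?thesis by (simp add: sum.distrib)
    qed
  next
    fix c \<rho>
    show "(\<lambda>\<rho> p q. \<Sum>k<length I. \<Phi> k (apply_krausA (I ! k) dA dA'' dB \<rho>) p q) (\<lambda>p q. c * \<rho> p q) =
      (\<lambda>p q. c * (\<lambda>\<rho> p q. \<Sum>k<length I. \<Phi> k (apply_krausA (I ! k) dA dA'' dB \<rho>) p q) \<rho> p q)"
    proof -
      have a1: "\<Phi> k (apply_krausA (I ! k) dA dA'' dB (\<lambda>p q. c * \<rho> p q)) =
        (\<lambda>p q. c * \<Phi> k (apply_krausA (I ! k) dA dA'' dB \<rho>) p q)"
        if "k < length I" for k using l[OF that] by (simp add: krausA_mult lin_map_def)
      have "(\<Sum>k<length I. \<Phi> k (apply_krausA (I ! k) dA dA'' dB (\<lambda>p q. c * \<rho> p q)) p q) =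
        (\<Sum>k<length I. c * \<Phi> k (apply_krausA (I ! k) dA dA'' dB \<rho>) p q)" for p q
        by (intro sum.cong refl) (simp add: a1)
      then show ?thesis by (simp add: sum_distrib_left)
    qed
  qed
next
  case (locc_B I dB dB'' dA dA' dB' \<Phi>)
  have l: "lin_map (\<Phi> k)" if "k < length I" for k using locc_B.IH that by blast
  show ?case unfolding lin_map_def
  proof (intro conjI allI)
    fix \<rho>1 \<rho>2
    show "(\<lambda>\<rho> p q. \<Sum>k<length I. \<Phi> k (apply_krausB (I ! k) dA dB dB'' \<rho>) p q) (\<lambda>p q. \<rho>1 p q + \<rho>2 p q) =
      (\<lambda>p q. (\<lambda>\<rho> p q. \<Sum>k<length I. \<Phi> k (apply_krausB (I ! k) dA dB dB'' \<rho>) p q) \<rho>1 p q +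
             (\<lambda>\<rho> p q. \<Sum>k<length I. \<Phi> k (apply_krausB (I ! k) dA dB dB'' \<rho>) p q) \<rho>2 p q)"
    proof -
      have a1: "\<Phi> k (apply_krausB (I ! k) dA dB dB'' (\<lambda>p q. \<rho>1 p q + \<rho>2 p q)) =
        (\<lambda>p q. \<Phi> k (apply_krausB (I ! k) dA dB dB'' \<rho>1) p q + \<Phi> k (apply_krausB (I ! k) dA dB dB'' \<rho>2) p q)"
        if "k < length I" for k using l[OF that] by (simp add: krausB_add lin_map_def)
      have "(\<Sum>k<length I. \<Phi> k (apply_krausB (I ! k) dA dB dB'' (\<lambda>p q. \<rho>1 p q + \<rho>2 p q)) p q) =
        (\<Sum>k<length I. \<Phi> k (apply_krausB (I ! k) dA dB dB'' \<rho>1) p q + \<Phi> k (apply_krausB (I ! k) dA dB dB'' \<rho>2) p q)" for p q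
        by (intro sum.cong refl) (simp add: a1)
      then show ?thesis by (simp add: sum.distrib)
    qed
  next
    fix c \<rho>
    show "(\<lambda>\<rho> p q. \<Sum>k<length I. \<Phi> k (apply_krausB (I ! k) dA dB dB'' \<rho>) p q) (\<lambda>p q. c * \<rho> p q) =
      (\<lambda>p q. c * (\<lambda>\<rho> p q. \<Sum>k<length I. \<Phi> k (apply_krausB (I ! k) dA dB dB'' \<rho>) p q) \<rho> p q)"
    proof -
      have a1: "\<Phi> k (apply_krausB (I ! k) dA dB dB'' (\<lambda>p q. c * \<rho> p q)) =
        (\<lambda>p q. c * \<Phi> k (apply_krausB (I ! k) dA dB dB'' \<rho>) p q)"
        if "k < length I" for k using l[OF that] by (simp add: krausB_mult lin_map_def)
      have "(\<Sum>k<length I. \<Phi> k (apply_krausB (I ! k) dA dB dB'' (\<lambda>p q. c * \<rho> p q)) p q) =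
        (\<Sum>k<length I. c * \<Phi> k (apply_krausB (I ! k) dA dB dB'' \<rho>) p q)" for p q
        by (intro sum.cong refl) (simp add: a1)
      then show ?thesis by (simp add: sum_distrib_left)
    qed
  qed
qed

lemma lin_zero: "lin_map \<Phi> \<Longrightarrow> \<Phi> (\<lambda>p q. 0) = (\<lambda>p q. 0)"
proof -
  assume "lin_map \<Phi>"
  then have h: "\<Phi> (\<lambda>p q. c * \<rho> p q) = (\<lambda>p q. c * \<Phi> \<rho> p q)" for c \<rho> unfolding lin_map_def by blast
  have "\<Phi> (\<lambda>p q. 0 * 0) = (\<lambda>p q. 0 * \<Phi> (\<lambda>p q. 0) p q)" by (rule h)
  then show ?thesis by simp
qed

lemma lin_sum: assumes "lin_map \<Phi>" "finite S"
  shows "\<Phi> (\<lambda>p q. \<Sum>i\<in>S. f i p q) = (\<lambda>p q. \<Sum>i\<in>S. \<Phi> (f i) p q)"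
  using assms(2)
proof (induction S rule: finite_induct)
  case empty then show ?case using lin_zero[OF assms(1)] by simp
next
  case (insert x F)
  have h: "\<Phi> (\<lambda>p q. \<rho>1 p q + \<rho>2 p q) = (\<lambda>p q. \<Phi> \<rho>1 p q + \<Phi> \<rho>2 p q)" for \<rho>1 \<rho>2
    using assms(1) unfolding lin_map_def by blast
  have "\<Phi> (\<lambda>p q. \<Sum>i\<in>insert x F. f i p q) = \<Phi> (\<lambda>p q. f x p q + (\<Sum>i\<in>F. f i p q))"
    using insert by simp
  also have "\<dots> = (\<lambda>p q. \<Phi> (f x) p q + \<Phi> (\<lambda>p q. \<Sum>i\<in>F. f i p q) p q)" by (rule h)
  finally show ?case using insert by simp
qed


definition tr :: "nat \<Rightarrow> nat \<Rightarrow> bop \<Rightarrow> complex" where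
  "tr d1 d2 \<rho> = (\<Sum>i<d1. \<Sum>j<d2. \<rho> (i, j) (i, j))"

lemma swap3: "(\<Sum>i\<in>A. \<Sum>x\<in>B. \<Sum>y\<in>C. f i x y) = (\<Sum>x\<in>B. \<Sum>y\<in>C. \<Sum>i\<in>A. f i x y)"
proof -
  have "(\<Sum>i\<in>A. \<Sum>x\<in>B. \<Sum>y\<in>C. f i x y) = (\<Sum>x\<in>B. \<Sum>i\<in>A. \<Sum>y\<in>C. f i x y)" by (rule sum.swap)
  also have "\<dots> = (\<Sum>x\<in>B. \<Sum>y\<in>C. \<Sum>i\<in>A. f i x y)" by (intro sum.cong refl) (rule sum.swap)
  finally show ?thesis .
qed

lemma sl_swap3: "(\<Sum>K\<leftarrow>Ks. \<Sum>x\<in>B. \<Sum>y\<in>C. f K x y) = (\<Sum>x\<in>B. \<Sum>y\<in>C. \<Sum>K\<leftarrow>Ks. f K x y)"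
proof -
  have "(\<Sum>K\<leftarrow>Ks. \<Sum>x\<in>B. \<Sum>y\<in>C. f K x y) = (\<Sum>x\<in>B. \<Sum>K\<leftarrow>Ks. \<Sum>y\<in>C. f K x y)" by (rule sl_sum_swap)
  also have "\<dots> = (\<Sum>x\<in>B. \<Sum>y\<in>C. \<Sum>K\<leftarrow>Ks. f K x y)" by (intro sum.cong refl) (rule sl_sum_swap)
  finally show ?thesis .
qed

definition GA :: "kmat list \<Rightarrow> nat \<Rightarrow> nat \<Rightarrow> nat \<Rightarrow> complex" where
  "GA Ks d' x y = (\<Sum>K\<leftarrow>Ks. \<Sum>i<d'. cnj (K i y) * K i x)"

lemma tr_krausA: "tr dA'' dB (apply_krausA Ks dA dA'' dB \<rho>) =
   (\<Sum>j<dB. \<Sum>x<dA. \<Sum>y<dA. \<rho> (x, j) (y, j) * GA Ks dA'' x y)"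
proof -
  have "tr dA'' dB (apply_krausA Ks dA dA'' dB \<rho>) =
    (\<Sum>i<dA''. \<Sum>j<dB. \<Sum>K\<leftarrow>Ks. \<Sum>x<dA. \<Sum>y<dA. K i x * \<rho> (x, j) (y, j) * cnj (K i y))"
    unfolding tr_def apply_krausA_def by simp
  also have "\<dots> = (\<Sum>j<dB. \<Sum>i<dA''. \<Sum>K\<leftarrow>Ks. \<Sum>x<dA. \<Sum>y<dA. K i x * \<rho> (x, j) (y, j) * cnj (K i y))"
    by (rule sum.swap)
  also have "\<dots> = (\<Sum>j<dB. \<Sum>K\<leftarrow>Ks. \<Sum>i<dA''. \<Sum>x<dA. \<Sum>y<dA. K i x * \<rho> (x, j) (y, j) * cnj (K i y))"
    by (intro sum.cong refl) (rule sl_sum_swap[symmetric])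
  also have "\<dots> = (\<Sum>j<dB. \<Sum>K\<leftarrow>Ks. \<Sum>x<dA. \<Sum>y<dA. \<Sum>i<dA''. K i x * \<rho> (x, j) (y, j) * cnj (K i y))"
    by (rule sum.cong[OF refl], rule arg_cong[where f=sum_list], rule map_cong[OF refl], rule swap3)
  also have "\<dots> = (\<Sum>j<dB. \<Sum>x<dA. \<Sum>y<dA. \<Sum>K\<leftarrow>Ks. \<Sum>i<dA''. K i x * \<rho> (x, j) (y, j) * cnj (K i y))"
    by (intro sum.cong refl) (rule sl_swap3)
  also have "\<dots> = (\<Sum>j<dB. \<Sum>x<dA. \<Sum>y<dA. \<rho> (x, j) (y, j) * GA Ks dA'' x y)"
  proof (intro sum.cong refl)
    fix j x y
    have e: "K i x * r * cnj (K i y) = r * (cnj (K i y) * K i x)" for K :: kmat and i r by (simp add: ac_simps)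
    show "(\<Sum>K\<leftarrow>Ks. \<Sum>i<dA''. K i x * \<rho> (x, j) (y, j) * cnj (K i y)) = \<rho> (x, j) (y, j) * GA Ks dA'' x y"
      unfolding GA_def by (simp add: e sum_distrib_left[symmetric] sl_mult)
  qed
  finally show ?thesis .
qed


lemma tr_krausB: "tr dA dB'' (apply_krausB Ks dA dB dB'' \<rho>) =
   (\<Sum>i<dA. \<Sum>x<dB. \<Sum>y<dB. \<rho> (i, x) (i, y) * GA Ks dB'' x y)"
proof -
  have "tr dA dB'' (apply_krausB Ks dA dB dB'' \<rho>) =
    (\<Sum>i<dA. \<Sum>j<dB''. \<Sum>K\<leftarrow>Ks. \<Sum>x<dB. \<Sum>y<dB. K j x * \<rho> (i, x) (i, y) * cnj (K j y))"
    unfolding tr_def apply_krausB_def by simp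
  also have "\<dots> = (\<Sum>i<dA. \<Sum>K\<leftarrow>Ks. \<Sum>j<dB''. \<Sum>x<dB. \<Sum>y<dB. K j x * \<rho> (i, x) (i, y) * cnj (K j y))"
    by (intro sum.cong refl) (rule sl_sum_swap[symmetric])
  also have "\<dots> = (\<Sum>i<dA. \<Sum>K\<leftarrow>Ks. \<Sum>x<dB. \<Sum>y<dB. \<Sum>j<dB''. K j x * \<rho> (i, x) (i, y) * cnj (K j y))"
    by (rule sum.cong[OF refl], rule arg_cong[where f=sum_list], rule map_cong[OF refl], rule swap3)
  also have "\<dots> = (\<Sum>i<dA. \<Sum>x<dB. \<Sum>y<dB. \<Sum>K\<leftarrow>Ks. \<Sum>j<dB''. K j x * \<rho> (i, x) (i, y) * cnj (K j y))"
    by (intro sum.cong refl) (rule sl_swap3)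
  also have "\<dots> = (\<Sum>i<dA. \<Sum>x<dB. \<Sum>y<dB. \<rho> (i, x) (i, y) * GA Ks dB'' x y)"
  proof (intro sum.cong refl)
    fix i x y
    have e: "K j x * r * cnj (K j y) = r * (cnj (K j y) * K j x)" for K :: kmat and j r by (simp add: ac_simps)
    show "(\<Sum>K\<leftarrow>Ks. \<Sum>j<dB''. K j x * \<rho> (i, x) (i, y) * cnj (K j y)) = \<rho> (i, x) (i, y) * GA Ks dB'' x y"
      unfolding GA_def by (simp add: e sum_distrib_left[symmetric] sl_mult)
  qed
  finally show ?thesis .
qed

lemma tr_sum: "tr d1 d2 (\<lambda>p q. \<Sum>k\<in>S. f k p q) = (\<Sum>k\<in>S. tr d1 d2 (f k))"
  unfolding tr_def
proof -
  have "(\<Sum>i<d1. \<Sum>j<d2. \<Sum>k\<in>S. f k (i, j) (i, j)) = (\<Sum>i<d1. \<Sum>k\<in>S. \<Sum>j<d2. f k (i, j) (i, j))"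
    by (intro sum.cong refl) (rule sum.swap)
  also have "\<dots> = (\<Sum>k\<in>S. \<Sum>i<d1. \<Sum>j<d2. f k (i, j) (i, j))" by (rule sum.swap)
  finally show "(\<Sum>i<d1. \<Sum>j<d2. \<Sum>k\<in>S. f k (i, j) (i, j)) = (\<Sum>k\<in>S. \<Sum>i<d1. \<Sum>j<d2. f k (i, j) (i, j))" .
qed

lemma instr_GA: assumes "instrument I d d'" "x < d" "y < d"
  shows "(\<Sum>k<length I. GA (I ! k) d' x y) = (if y = x then 1 else 0)"
proof -
  have "(\<Sum>k<length I. GA (I ! k) d' x y) = (\<Sum>Ks\<leftarrow>I. GA Ks d' x y)" by (rule sl_sum_nth)
  also have "\<dots> = (\<Sum>Ks\<leftarrow>I. \<Sum>K\<leftarrow>Ks. \<Sum>i<d'. cnj (K i y) * K i x)" unfolding GA_def ..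
  also have "\<dots> = (if y = x then 1 else 0)"
    using assms(1) assms(2,3) unfolding instrument_def by blast
  finally show ?thesis .
qed

lemma delta_sum: "y0 < (d::nat) \<Longrightarrow> (\<Sum>y<d. r y * (if y0 = y then 1 else 0)) = (r y0 :: complex)"
proof -
  assume "y0 < d"
  have "(\<Sum>y<d. r y * (if y0 = y then 1 else 0)) = (\<Sum>y<d. (if y0 = y then r y else 0))"
    by (intro sum.cong) auto
  also have "\<dots> = r y0" using \<open>y0 < d\<close> by (subst sum.delta') auto
  finally show ?thesis .
qed

lemma locc_tr: "locc dA dB dA' dB' \<Phi> \<Longrightarrow> tr dA' dB' (\<Phi> \<rho>) = tr dA dB \<rho>"
proof (induction arbitrary: \<rho> rule: locc.induct)
  case (locc_id dA dB)
  then show ?case by simp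
next
  case (locc_A I dA dA'' dB dA' dB' \<Phi>)
  have ih: "tr dA' dB' (\<Phi> k \<sigma>) = tr dA'' dB \<sigma>" if "k < length I" for k \<sigma> using locc_A.IH that by blast
  have G: "(\<Sum>k<length I. GA (I ! k) dA'' x y) = (if x = y then 1 else 0)" if "x < dA" "y < dA" for x y
    using instr_GA[OF locc_A.hyps(1) that] by auto
  have "tr dA' dB' (\<lambda>p q. \<Sum>k<length I. \<Phi> k (apply_krausA (I ! k) dA dA'' dB \<rho>) p q) =
      (\<Sum>k<length I. tr dA' dB' (\<Phi> k (apply_krausA (I ! k) dA dA'' dB \<rho>)))" by (rule tr_sum)
  also have "\<dots> = (\<Sum>k<length I. tr dA'' dB (apply_krausA (I ! k) dA dA'' dB \<rho>))"
    by (intro sum.cong refl) (simp add: ih)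
  also have "\<dots> = (\<Sum>k<length I. \<Sum>j<dB. \<Sum>x<dA. \<Sum>y<dA. \<rho> (x, j) (y, j) * GA (I ! k) dA'' x y)"
    by (simp only: tr_krausA)
  also have "\<dots> = (\<Sum>j<dB. \<Sum>k<length I. \<Sum>x<dA. \<Sum>y<dA. \<rho> (x, j) (y, j) * GA (I ! k) dA'' x y)"
    by (rule sum.swap)
  also have "\<dots> = (\<Sum>j<dB. \<Sum>x<dA. \<Sum>y<dA. \<Sum>k<length I. \<rho> (x, j) (y, j) * GA (I ! k) dA'' x y)"
    by (rule sum.cong[OF refl], rule swap3)
  also have "\<dots> = (\<Sum>j<dB. \<Sum>x<dA. \<Sum>y<dA. \<rho> (x, j) (y, j) * (if x = y then 1 else 0))"
    by (intro sum.cong refl) (simp add: sum_distrib_left[symmetric] G)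
  also have "\<dots> = (\<Sum>j<dB. \<Sum>x<dA. \<rho> (x, j) (x, j))"
    by (intro sum.cong refl) (simp add: delta_sum)
  also have "\<dots> = tr dA dB \<rho>" unfolding tr_def by (rule sum.swap)
  finally show ?case .
next
  case (locc_B I dB dB'' dA dA' dB' \<Phi>)
  have ih: "tr dA' dB' (\<Phi> k \<sigma>) = tr dA dB'' \<sigma>" if "k < length I" for k \<sigma> using locc_B.IH that by blast
  have G: "(\<Sum>k<length I. GA (I ! k) dB'' x y) = (if x = y then 1 else 0)" if "x < dB" "y < dB" for x y
    using instr_GA[OF locc_B.hyps(1) that] by auto
  have "tr dA' dB' (\<lambda>p q. \<Sum>k<length I. \<Phi> k (apply_krausB (I ! k) dA dB dB'' \<rho>) p q) =
      (\<Sum>k<length I. tr dA' dB' (\<Phi> k (apply_krausB (I ! k) dA dB dB'' \<rho>)))" by (rule tr_sum)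
  also have "\<dots> = (\<Sum>k<length I. tr dA dB'' (apply_krausB (I ! k) dA dB dB'' \<rho>))"
    by (intro sum.cong refl) (simp add: ih)
  also have "\<dots> = (\<Sum>k<length I. \<Sum>i<dA. \<Sum>x<dB. \<Sum>y<dB. \<rho> (i, x) (i, y) * GA (I ! k) dB'' x y)"
    by (simp only: tr_krausB)
  also have "\<dots> = (\<Sum>i<dA. \<Sum>k<length I. \<Sum>x<dB. \<Sum>y<dB. \<rho> (i, x) (i, y) * GA (I ! k) dB'' x y)"
    by (rule sum.swap)
  also have "\<dots> = (\<Sum>i<dA. \<Sum>x<dB. \<Sum>y<dB. \<Sum>k<length I. \<rho> (i, x) (i, y) * GA (I ! k) dB'' x y)"
    by (rule sum.cong[OF refl], rule swap3)
  also have "\<dots> = (\<Sum>i<dA. \<Sum>x<dB. \<Sum>y<dB. \<rho> (i, x) (i, y) * (if x = y then 1 else 0))"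
    by (intro sum.cong refl) (simp add: sum_distrib_left[symmetric] G)
  also have "\<dots> = (\<Sum>i<dA. \<Sum>x<dB. \<rho> (i, x) (i, x))"
    by (intro sum.cong refl) (simp add: delta_sum)
  also have "\<dots> = tr dA dB \<rho>" unfolding tr_def ..
  finally show ?case .
qed




definition good :: "nat \<Rightarrow> nat \<Rightarrow> nat \<Rightarrow> bop \<Rightarrow> bool" where
  "good r d1 d2 \<rho> \<longleftrightarrow> (\<exists>vs. (\<forall>\<psi>\<in>set vs. schmidt_rank_le r d1 d2 \<psi>) \<and>
     (\<forall>i j i' j'. i < d1 \<longrightarrow> j < d2 \<longrightarrow> i' < d1 \<longrightarrow> j' < d2 \<longrightarrow>
        \<rho> (i, j) (i', j') = (\<Sum>\<psi>\<leftarrow>vs. \<psi> (i, j) * cnj (\<psi> (i', j')))))"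

lemma sl_concat: "(\<Sum>z\<leftarrow>concat (map (\<lambda>K. map (g K) vs) Ks). f z) = (\<Sum>K\<leftarrow>Ks. \<Sum>\<psi>\<leftarrow>vs. f (g K \<psi>))"
  by (induction Ks) (simp_all add: comp_def)

lemma sl_mult_right: "(\<Sum>K\<leftarrow>Ks. f K * c) = (\<Sum>K\<leftarrow>Ks. (f K :: 'a::comm_semiring_0)) * c"
  by (induction Ks) (simp_all add: algebra_simps)

lemma cnj_sl: "cnj (\<Sum>K\<leftarrow>Ks. f K) = (\<Sum>K\<leftarrow>Ks. cnj (f K))"
  by (induction Ks) simp_all

definition kvA :: "kmat \<Rightarrow> nat \<Rightarrow> bvec \<Rightarrow> bvec" where
  "kvA K dA \<psi> = (\<lambda>(i, j). \<Sum>x<dA. K i x * \<psi> (x, j))"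

definition kvB :: "kmat \<Rightarrow> nat \<Rightarrow> bvec \<Rightarrow> bvec" where
  "kvB K dB \<psi> = (\<lambda>(i, j). \<Sum>x<dB. K j x * \<psi> (i, x))"

lemma rank_kvA: assumes "schmidt_rank_le r dA dB \<psi>" shows "schmidt_rank_le r dA' dB (kvA K dA \<psi>)"
proof -
  obtain u v where uv: "\<forall>x<dA. \<forall>y<dB. \<psi> (x, y) = (\<Sum>l<r. u l x * v l y)"
    using assms unfolding schmidt_rank_le_def by blast
  define u' where "u' l i = (\<Sum>x<dA. K i x * u l x)" for l i
  have "kvA K dA \<psi> (i, y) = (\<Sum>l<r. u' l i * v l y)" if "i < dA'" "y < dB" for i y
  proof -
    have "kvA K dA \<psi> (i, y) = (\<Sum>x<dA. K i x * (\<Sum>l<r. u l x * v l y))"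
      unfolding kvA_def using uv that by simp
    also have "\<dots> = (\<Sum>x<dA. \<Sum>l<r. K i x * u l x * v l y)"
      by (simp add: sum_distrib_left mult.assoc)
    also have "\<dots> = (\<Sum>l<r. \<Sum>x<dA. K i x * u l x * v l y)" by (rule sum.swap)
    also have "\<dots> = (\<Sum>l<r. u' l i * v l y)" unfolding u'_def by (simp add: sum_distrib_right)
    finally show ?thesis .
  qed
  then show ?thesis unfolding schmidt_rank_le_def by blast
qed

lemma rank_kvB: assumes "schmidt_rank_le r dA dB \<psi>" shows "schmidt_rank_le r dA dB' (kvB K dB \<psi>)"
proof -
  obtain u v where uv: "\<forall>x<dA. \<forall>y<dB. \<psi> (x, y) = (\<Sum>l<r. u l x * v l y)"
    using assms unfolding schmidt_rank_le_def by blast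
  define v' where "v' l j = (\<Sum>y<dB. K j y * v l y)" for l j
  have "kvB K dB \<psi> (x, j) = (\<Sum>l<r. u l x * v' l j)" if "x < dA" "j < dB'" for x j
  proof -
    have "kvB K dB \<psi> (x, j) = (\<Sum>y<dB. K j y * (\<Sum>l<r. u l x * v l y))"
      unfolding kvB_def using uv that by simp
    also have "\<dots> = (\<Sum>y<dB. \<Sum>l<r. u l x * (K j y * v l y))"
      by (simp add: sum_distrib_left ac_simps)
    also have "\<dots> = (\<Sum>l<r. \<Sum>y<dB. u l x * (K j y * v l y))" by (rule sum.swap)
    also have "\<dots> = (\<Sum>l<r. u l x * v' l j)" unfolding v'_def by (simp add: sum_distrib_left)
    finally show ?thesis .
  qed
  then show ?thesis unfolding schmidt_rank_le_def by blast
qed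

lemma good_krausA: assumes "good r dA dB \<rho>" shows "good r dA' dB (apply_krausA Ks dA dA' dB \<rho>)"
proof -
  obtain vs where vs: "\<forall>\<psi>\<in>set vs. schmidt_rank_le r dA dB \<psi>"
    "\<And>i j i' j'. i < dA \<Longrightarrow> j < dB \<Longrightarrow> i' < dA \<Longrightarrow> j' < dB \<Longrightarrow>
        \<rho> (i, j) (i', j') = (\<Sum>\<psi>\<leftarrow>vs. \<psi> (i, j) * cnj (\<psi> (i', j')))"
    using assms unfolding good_def by blast
  define ws where "ws = concat (map (\<lambda>K. map (kvA K dA) vs) Ks)"
  have "\<forall>\<psi>\<in>set ws. schmidt_rank_le r dA' dB \<psi>" unfolding ws_def using vs(1) rank_kvA by auto
  moreover have "apply_krausA Ks dA dA' dB \<rho> (i, j) (i', j') = (\<Sum>\<psi>\<leftarrow>ws. \<psi> (i, j) * cnj (\<psi> (i', j')))"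
    if "i < dA'" "j < dB" "i' < dA'" "j' < dB" for i j i' j'
  proof -
    have "apply_krausA Ks dA dA' dB \<rho> (i, j) (i', j') =
       (\<Sum>K\<leftarrow>Ks. \<Sum>x<dA. \<Sum>y<dA. K i x * (\<Sum>\<psi>\<leftarrow>vs. \<psi> (x, j) * cnj (\<psi> (y, j'))) * cnj (K i' y))"
      unfolding apply_krausA_def using that vs(2) by simp
    also have "\<dots> = (\<Sum>K\<leftarrow>Ks. \<Sum>x<dA. \<Sum>y<dA. \<Sum>\<psi>\<leftarrow>vs. (K i x * \<psi> (x, j)) * (cnj (K i' y) * cnj (\<psi> (y, j'))))"
    proof -
      have e: "a * (\<Sum>\<psi>\<leftarrow>vs. f \<psi>) * b = (\<Sum>\<psi>\<leftarrow>vs. a * f \<psi> * b)" for a b :: complex and f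
        by (simp add: sl_mult sl_mult_right)
      have e2: "a * (p * q) * b = (a * p) * (b * q)" for a b p q :: complex by (simp add: ac_simps)
      show ?thesis by (simp only: e e2)
    qed
    also have "\<dots> = (\<Sum>K\<leftarrow>Ks. \<Sum>\<psi>\<leftarrow>vs. \<Sum>x<dA. \<Sum>y<dA. (K i x * \<psi> (x, j)) * (cnj (K i' y) * cnj (\<psi> (y, j'))))"
      by (simp only: sl_swap3)
    also have "\<dots> = (\<Sum>K\<leftarrow>Ks. \<Sum>\<psi>\<leftarrow>vs. kvA K dA \<psi> (i, j) * cnj (kvA K dA \<psi> (i', j')))"
      unfolding kvA_def by (simp add: sum_product cnj_sum)
    also have "\<dots> = (\<Sum>\<psi>\<leftarrow>ws. \<psi> (i, j) * cnj (\<psi> (i', j')))"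
      unfolding ws_def by (simp only: sl_concat)
    finally show ?thesis .
  qed
  ultimately show ?thesis unfolding good_def by blast
qed


lemma good_krausB: assumes "good r dA dB \<rho>" shows "good r dA dB' (apply_krausB Ks dA dB dB' \<rho>)"
proof -
  obtain vs where vs: "\<forall>\<psi>\<in>set vs. schmidt_rank_le r dA dB \<psi>"
    "\<And>i j i' j'. i < dA \<Longrightarrow> j < dB \<Longrightarrow> i' < dA \<Longrightarrow> j' < dB \<Longrightarrow>
        \<rho> (i, j) (i', j') = (\<Sum>\<psi>\<leftarrow>vs. \<psi> (i, j) * cnj (\<psi> (i', j')))"
    using assms unfolding good_def by blast
  define ws where "ws = concat (map (\<lambda>K. map (kvB K dB) vs) Ks)"
  have "\<forall>\<psi>\<in>set ws. schmidt_rank_le r dA dB' \<psi>" unfolding ws_def using vs(1) rank_kvB by auto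
  moreover have "apply_krausB Ks dA dB dB' \<rho> (i, j) (i', j') = (\<Sum>\<psi>\<leftarrow>ws. \<psi> (i, j) * cnj (\<psi> (i', j')))"
    if "i < dA" "j < dB'" "i' < dA" "j' < dB'" for i j i' j'
  proof -
    have "apply_krausB Ks dA dB dB' \<rho> (i, j) (i', j') =
       (\<Sum>K\<leftarrow>Ks. \<Sum>x<dB. \<Sum>y<dB. K j x * (\<Sum>\<psi>\<leftarrow>vs. \<psi> (i, x) * cnj (\<psi> (i', y))) * cnj (K j' y))"
      unfolding apply_krausB_def using that vs(2) by simp
    also have "\<dots> = (\<Sum>K\<leftarrow>Ks. \<Sum>x<dB. \<Sum>y<dB. \<Sum>\<psi>\<leftarrow>vs. (K j x * \<psi> (i, x)) * (cnj (K j' y) * cnj (\<psi> (i', y))))"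
    proof -
      have e: "a * (\<Sum>\<psi>\<leftarrow>vs. f \<psi>) * b = (\<Sum>\<psi>\<leftarrow>vs. a * f \<psi> * b)" for a b :: complex and f
        by (simp add: sl_mult sl_mult_right)
      have e2: "a * (p * q) * b = (a * p) * (b * q)" for a b p q :: complex by (simp add: ac_simps)
      show ?thesis by (simp only: e e2)
    qed
    also have "\<dots> = (\<Sum>K\<leftarrow>Ks. \<Sum>\<psi>\<leftarrow>vs. \<Sum>x<dB. \<Sum>y<dB. (K j x * \<psi> (i, x)) * (cnj (K j' y) * cnj (\<psi> (i', y))))"
      by (simp only: sl_swap3)
    also have "\<dots> = (\<Sum>K\<leftarrow>Ks. \<Sum>\<psi>\<leftarrow>vs. kvB K dB \<psi> (i, j) * cnj (kvB K dB \<psi> (i', j')))"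
      unfolding kvB_def by (simp add: sum_product cnj_sum)
    also have "\<dots> = (\<Sum>\<psi>\<leftarrow>ws. \<psi> (i, j) * cnj (\<psi> (i', j')))"
      unfolding ws_def by (simp only: sl_concat)
    finally show ?thesis .
  qed
  ultimately show ?thesis unfolding good_def by blast
qed

lemma good_zero: "good r d1 d2 (\<lambda>p q. 0)"
  unfolding good_def by (rule exI[of _ "[]"]) simp

lemma good_add: assumes "good r d1 d2 \<rho>1" "good r d1 d2 \<rho>2"
  shows "good r d1 d2 (\<lambda>p q. \<rho>1 p q + \<rho>2 p q)"
proof -
  obtain vs where vs: "\<forall>\<psi>\<in>set vs. schmidt_rank_le r d1 d2 \<psi>"
    "\<And>i j i' j'. i < d1 \<Longrightarrow> j < d2 \<Longrightarrow> i' < d1 \<Longrightarrow> j' < d2 \<Longrightarrow>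
        \<rho>1 (i, j) (i', j') = (\<Sum>\<psi>\<leftarrow>vs. \<psi> (i, j) * cnj (\<psi> (i', j')))"
    using assms(1) unfolding good_def by blast
  obtain ws where ws: "\<forall>\<psi>\<in>set ws. schmidt_rank_le r d1 d2 \<psi>"
    "\<And>i j i' j'. i < d1 \<Longrightarrow> j < d2 \<Longrightarrow> i' < d1 \<Longrightarrow> j' < d2 \<Longrightarrow>
        \<rho>2 (i, j) (i', j') = (\<Sum>\<psi>\<leftarrow>ws. \<psi> (i, j) * cnj (\<psi> (i', j')))"
    using assms(2) unfolding good_def by blast
  show ?thesis unfolding good_def
    by (rule exI[of _ "vs @ ws"]) (use vs ws in auto)
qed

lemma good_sum: "(\<And>k. k < (L::nat) \<Longrightarrow> good r d1 d2 (f k)) \<Longrightarrow> good r d1 d2 (\<lambda>p q. \<Sum>k<L. f k p q)"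
proof (induction L)
  case 0 then show ?case using good_zero by simp
next
  case (Suc L)
  have "good r d1 d2 (\<lambda>p q. (\<Sum>k<L. f k p q) + f L p q)"
    by (rule good_add) (use Suc in auto)
  then show ?case by simp
qed

lemma locc_good: "locc dA dB dA' dB' \<Phi> \<Longrightarrow> good r dA dB \<rho> \<Longrightarrow> good r dA' dB' (\<Phi> \<rho>)"
proof (induction arbitrary: \<rho> rule: locc.induct)
  case (locc_id dA dB)
  then show ?case by simp
next
  case (locc_A I dA dA'' dB dA' dB' \<Phi>)
  have ih: "good r dA' dB' (\<Phi> k \<sigma>)" if "k < length I" "good r dA'' dB \<sigma>" for k \<sigma>
    using locc_A.IH that by blast
  show ?case
    by (rule good_sum) (use ih good_krausA locc_A.prems in blast)
next
  case (locc_B I dB dB'' dA dA' dB' \<Phi>)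
  have ih: "good r dA' dB' (\<Phi> k \<sigma>)" if "k < length I" "good r dA dB'' \<sigma>" for k \<sigma>
    using locc_B.IH that by blast
  show ?case
    by (rule good_sum) (use ih good_krausB locc_B.prems in blast)
qed




definition ipN :: "nat \<Rightarrow> (nat \<Rightarrow> complex) \<Rightarrow> (nat \<Rightarrow> complex) \<Rightarrow> complex" where
  "ipN N f g = (\<Sum>x<N. cnj (f x) * g x)"

lemma ipN_cnj: "cnj (ipN N f g) = ipN N g f"
  unfolding ipN_def by (simp add: cnj_sum mult.commute)

lemma ipN_self: "ipN N f f = of_real (\<Sum>x<N. (cmod (f x))\<^sup>2)"
  unfolding ipN_def of_real_sum complex_norm_square by (simp add: mult.commute)

lemma ipN_zero: assumes "ipN N f f = 0" shows "ipN N f g = 0"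
proof -
  have "(\<Sum>x<N. (cmod (f x))\<^sup>2) = 0" using assms by (simp only: ipN_self of_real_eq_0_iff)
  then have "\<forall>x\<in>{..<N}. (cmod (f x))\<^sup>2 = 0" by (subst sum_nonneg_eq_0_iff[symmetric]) auto
  then show ?thesis unfolding ipN_def by simp
qed

lemma ipN_lin: "ipN N f (\<lambda>x. g x - (\<Sum>l<r. c l * h l x)) = ipN N f g - (\<Sum>l<r. c l * ipN N f (h l))"
  unfolding ipN_def
  by (simp add: right_diff_distrib sum_subtractf sum_distrib_left sum.swap[of _ "{..<N}"] ac_simps)

lemma gs: fixes r :: nat and u v :: "nat \<Rightarrow> nat \<Rightarrow> complex" shows "\<exists>q w. (\<forall>l<r. \<forall>l'<r. l \<noteq> l' \<longrightarrow> ipN N (q l) (q l') = 0) \<and>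
   (\<forall>x<N. \<forall>y. (\<Sum>l<r. u l x * v l y) = (\<Sum>l<r. q l x * w l y))"
proof (induction r)
  case 0 then show ?case by simp
next
  case (Suc r)
  then obtain q w where o: "\<forall>l<r. \<forall>l'<r. l \<noteq> l' \<longrightarrow> ipN N (q l) (q l') = 0"
    and d: "\<forall>x<N. \<forall>y. (\<Sum>l<r. u l x * v l y) = (\<Sum>l<r. q l x * w l y)" by blast
  define c where "c l = ipN N (q l) (u r) / ipN N (q l) (q l)" for l
  define qr where "qr x = u r x - (\<Sum>l<r. c l * q l x)" for x
  define q' where "q' = q(r := qr)"
  define w' where "w' l y = (if l < r then w l y + c l * v r y else v r y)" for l y
  have c: "c l * ipN N (q l) (q l) = ipN N (q l) (u r)" for l
    using ipN_zero[of N "q l" "u r"] by (cases "ipN N (q l) (q l) = 0") (auto simp: c_def)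
  have o1: "ipN N (q l) qr = 0" if "l < r" for l
  proof -
    have "ipN N (q l) qr = ipN N (q l) (u r) - (\<Sum>l'<r. c l' * ipN N (q l) (q l'))"
      unfolding qr_def by (rule ipN_lin)
    also have "(\<Sum>l'<r. c l' * ipN N (q l) (q l')) = (\<Sum>l'<r. if l' = l then c l * ipN N (q l) (q l) else 0)"
      by (intro sum.cong refl) (use o that in auto)
    also have "\<dots> = c l * ipN N (q l) (q l)" using that by simp
    finally show ?thesis using c by simp
  qed
  have orth: "\<forall>l<Suc r. \<forall>l'<Suc r. l \<noteq> l' \<longrightarrow> ipN N (q' l) (q' l') = 0"
  proof (intro allI impI)
    fix l l' assume l: "l < Suc r" "l' < Suc r" "l \<noteq> l'"
    show "ipN N (q' l) (q' l') = 0"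
    proof (cases "l = r")
      case True
      then have "l' < r" using l by auto
      then show ?thesis using True o1[of l'] ipN_cnj[of N "q l'" qr] by (simp add: q'_def)
    next
      case False
      then have lr: "l < r" using l by auto
      show ?thesis
      proof (cases "l' = r")
        case True then show ?thesis using o1[OF lr] lr by (simp add: q'_def)
      next
        case False then show ?thesis using o lr l by (simp add: q'_def)
      qed
    qed
  qed
  have dec: "\<forall>x<N. \<forall>y. (\<Sum>l<Suc r. u l x * v l y) = (\<Sum>l<Suc r. q' l x * w' l y)"
  proof (intro allI impI)
    fix x y assume x: "x < N"
    have "(\<Sum>l<Suc r. q' l x * w' l y) = (\<Sum>l<r. q l x * (w l y + c l * v r y)) + qr x * v r y"
      by (simp add: q'_def w'_def)
    also have "\<dots> = (\<Sum>l<r. q l x * w l y) + (\<Sum>l<r. c l * q l x) * v r y + qr x * v r y"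
    proof -
      have "(\<Sum>l<r. c l * q l x) * v r y = (\<Sum>l<r. q l x * (c l * v r y))"
        unfolding sum_distrib_right by (rule sum.cong) (simp_all add: ac_simps)
      then show ?thesis by (simp add: distrib_left sum.distrib)
    qed
    also have "\<dots> = (\<Sum>l<r. q l x * w l y) + u r x * v r y"
      unfolding qr_def by (simp add: algebra_simps)
    also have "\<dots> = (\<Sum>l<Suc r. u l x * v l y)" using d x by simp
    finally show "(\<Sum>l<Suc r. u l x * v l y) = (\<Sum>l<Suc r. q' l x * w' l y)" by simp
  qed
  show ?case using orth dec by blast
qed


lemma cs_complex: "(cmod (\<Sum>x\<in>A. a x * b x))\<^sup>2 \<le> (\<Sum>x\<in>A. (cmod (a x))\<^sup>2) * (\<Sum>x\<in>A. (cmod (b x))\<^sup>2)"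
proof -
  have "cmod (\<Sum>x\<in>A. a x * b x) \<le> (\<Sum>x\<in>A. cmod (a x) * cmod (b x))"
    by (rule order_trans[OF norm_sum]) (simp add: norm_mult)
  then have "(cmod (\<Sum>x\<in>A. a x * b x))\<^sup>2 \<le> (\<Sum>x\<in>A. cmod (a x) * cmod (b x))\<^sup>2"
    by (rule power_mono) simp
  also have "\<dots> \<le> (\<Sum>x\<in>A. (cmod (a x))\<^sup>2) * (\<Sum>x\<in>A. (cmod (b x))\<^sup>2)"
    by (rule Cauchy_Schwarz_ineq_sum)
  finally show ?thesis .
qed

lemma cs_count: "(\<Sum>l<(r::nat). s l)\<^sup>2 \<le> real r * (\<Sum>l<r. (s l :: real)\<^sup>2)"
proof -
  have "(\<Sum>l<r. 1 * s l)\<^sup>2 \<le> (\<Sum>l<r. 1\<^sup>2) * (\<Sum>l<r. (s l)\<^sup>2)" by (rule Cauchy_Schwarz_ineq_sum)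
  then show ?thesis by simp
qed

lemma swap4: "(\<Sum>a\<in>A. \<Sum>b\<in>B. \<Sum>c\<in>C. \<Sum>d\<in>D. f a b c d) = (\<Sum>c\<in>C. \<Sum>d\<in>D. \<Sum>a\<in>A. \<Sum>b\<in>B. f a b c d)"
proof -
  have "(\<Sum>a\<in>A. \<Sum>b\<in>B. \<Sum>c\<in>C. \<Sum>d\<in>D. f a b c d) = (\<Sum>a\<in>A. \<Sum>c\<in>C. \<Sum>d\<in>D. \<Sum>b\<in>B. f a b c d)"
    by (rule sum.cong[OF refl], rule swap3)
  also have "\<dots> = (\<Sum>c\<in>C. \<Sum>d\<in>D. \<Sum>a\<in>A. \<Sum>b\<in>B. f a b c d)" by (rule swap3)
  finally show ?thesis .
qed

lemma fid: assumes "schmidt_rank_le r N N \<psi>"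
  shows "(cmod (\<Sum>x<N. \<psi> (x, x)))\<^sup>2 \<le> real r * (\<Sum>x<N. \<Sum>y<N. (cmod (\<psi> (x, y)))\<^sup>2)"
proof -
  obtain u v where uv: "\<forall>x<N. \<forall>y<N. \<psi> (x, y) = (\<Sum>l<r. u l x * v l y)"
    using assms unfolding schmidt_rank_le_def by blast
  obtain q w where o: "\<forall>l<r. \<forall>l'<r. l \<noteq> l' \<longrightarrow> ipN N (q l) (q l') = 0"
    and d: "\<forall>x<N. \<forall>y. (\<Sum>l<r. u l x * v l y) = (\<Sum>l<r. q l x * w l y)"
    using gs[of r N u v] by blast
  have psi: "\<psi> (x, y) = (\<Sum>l<r. q l x * w l y)" if "x < N" "y < N" for x y using uv d that by simp
  define nq where "nq l = (\<Sum>x<N. (cmod (q l x))\<^sup>2)" for l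
  define nw where "nw l = (\<Sum>y<N. (cmod (w l y))\<^sup>2)" for l
  define t where "t l = (\<Sum>x<N. q l x * w l x)" for l
  have T: "(\<Sum>x<N. \<psi> (x, x)) = (\<Sum>l<r. t l)"
    unfolding t_def by (simp add: psi sum.swap[of _ "{..<N}"])
  have a: "(cmod (t l))\<^sup>2 \<le> nq l * nw l" for l unfolding t_def nq_def nw_def by (rule cs_complex)
  have b: "(cmod (\<Sum>l<r. t l))\<^sup>2 \<le> real r * (\<Sum>l<r. (cmod (t l))\<^sup>2)"
  proof -
    have "(cmod (\<Sum>l<r. t l))\<^sup>2 \<le> (\<Sum>l<r. cmod (t l))\<^sup>2"
      by (rule power_mono[OF norm_sum]) simp
    also have "\<dots> \<le> real r * (\<Sum>l<r. (cmod (t l))\<^sup>2)" by (rule cs_count)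
    finally show ?thesis .
  qed
  have c: "(\<Sum>x<N. \<Sum>y<N. (cmod (\<psi> (x, y)))\<^sup>2) = (\<Sum>l<r. nq l * nw l)"
  proof -
    have qq: "(\<Sum>x<N. q l x * cnj (q l' x)) = (if l = l' then of_real (nq l) else 0)" if "l < r" "l' < r" for l l'
    proof (cases "l = l'")
      case True then show ?thesis unfolding nq_def of_real_sum complex_norm_square by simp
    next
      case False
      then have "ipN N (q l') (q l) = 0" using o that by auto
      then show ?thesis using False unfolding ipN_def by (simp add: mult.commute)
    qed
    have ww: "(\<Sum>y<N. w l y * cnj (w l y)) = of_real (nw l)" for l
      unfolding nw_def of_real_sum complex_norm_square ..
    have "complex_of_real (\<Sum>x<N. \<Sum>y<N. (cmod (\<psi> (x, y)))\<^sup>2) = (\<Sum>x<N. \<Sum>y<N. \<psi> (x, y) * cnj (\<psi> (x, y)))"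
      unfolding of_real_sum complex_norm_square ..
    also have "\<dots> = (\<Sum>x<N. \<Sum>y<N. \<Sum>l<r. \<Sum>l'<r. (q l x * cnj (q l' x)) * (w l y * cnj (w l' y)))"
      by (intro sum.cong refl) (simp add: psi sum_product cnj_sum ac_simps)
    also have "\<dots> = (\<Sum>l<r. \<Sum>l'<r. \<Sum>x<N. \<Sum>y<N. (q l x * cnj (q l' x)) * (w l y * cnj (w l' y)))"
      by (rule swap4)
    also have "\<dots> = (\<Sum>l<r. \<Sum>l'<r. (\<Sum>x<N. q l x * cnj (q l' x)) * (\<Sum>y<N. w l y * cnj (w l' y)))"
      by (simp add: sum_product)
    also have "\<dots> = (\<Sum>l<r. \<Sum>l'<r. if l = l' then of_real (nq l) * of_real (nw l) else 0)"
      by (intro sum.cong refl) (simp add: qq ww)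
    also have "\<dots> = complex_of_real (\<Sum>l<r. nq l * nw l)"
      by (simp add: of_real_sum)
    finally show ?thesis by (simp only: of_real_eq_iff)
  qed
  have "(cmod (\<Sum>x<N. \<psi> (x, x)))\<^sup>2 \<le> real r * (\<Sum>l<r. (cmod (t l))\<^sup>2)" using T b by simp
  also have "\<dots> \<le> real r * (\<Sum>l<r. nq l * nw l)"
    by (intro mult_left_mono sum_mono a) simp
  finally show ?thesis using c by simp
qed




definition nrm :: "nat \<Rightarrow> bvec \<Rightarrow> real" where
  "nrm n \<psi> = (\<Sum>x<2^n. \<Sum>y<2^n. (cmod (\<psi> (x, y)))\<^sup>2)"

lemma good_decomp: assumes "good r (2^n) (2^n) \<sigma>"
  shows "\<exists>vs. (\<forall>\<psi>\<in>set vs. schmidt_rank_le r (2^n) (2^n) \<psi>) \<and>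
     quad n \<phi> \<sigma> = (\<Sum>\<psi>\<leftarrow>vs. of_real ((cmod (ip n \<phi> \<psi>))\<^sup>2)) \<and>
     tr (2^n) (2^n) \<sigma> = (\<Sum>\<psi>\<leftarrow>vs. of_real (nrm n \<psi>))"
proof -
  obtain vs where vs: "\<forall>\<psi>\<in>set vs. schmidt_rank_le r (2^n) (2^n) \<psi>"
    "\<And>i j i' j'. i < 2^n \<Longrightarrow> j < 2^n \<Longrightarrow> i' < 2^n \<Longrightarrow> j' < 2^n \<Longrightarrow>
        \<sigma> (i, j) (i', j') = (\<Sum>\<psi>\<leftarrow>vs. \<psi> (i, j) * cnj (\<psi> (i', j')))"
    using assms unfolding good_def by blast
  have sR: "\<sigma> p q = (\<Sum>\<psi>\<leftarrow>vs. \<psi> p * cnj (\<psi> q))" if "p \<in> R n" "q \<in> R n" for p q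
    using that vs(2) by (cases p, cases q) (auto simp: R_def)
  have "quad n \<phi> \<sigma> = (\<Sum>p\<in>R n. \<Sum>q\<in>R n. \<Sum>\<psi>\<leftarrow>vs. (cnj (\<phi> p) * \<psi> p) * (cnj (\<psi> q) * \<phi> q))"
    unfolding quad_def
  proof (intro sum.cong refl)
    fix p q assume "p \<in> R n" "q \<in> R n"
    have e: "a * (\<Sum>\<psi>\<leftarrow>vs. f \<psi>) * b = (\<Sum>\<psi>\<leftarrow>vs. a * f \<psi> * b)" for a b :: complex and f
      by (simp add: sl_mult sl_mult_right)
    have e2: "a * (p * q) * b = (a * p) * (q * b)" for a b p q :: complex by (simp add: ac_simps)
    show "cnj (\<phi> p) * \<sigma> p q * \<phi> q = (\<Sum>\<psi>\<leftarrow>vs. (cnj (\<phi> p) * \<psi> p) * (cnj (\<psi> q) * \<phi> q))"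
      by (simp only: sR[OF \<open>p \<in> R n\<close> \<open>q \<in> R n\<close>] e e2)
  qed
  also have "\<dots> = (\<Sum>\<psi>\<leftarrow>vs. \<Sum>p\<in>R n. \<Sum>q\<in>R n. (cnj (\<phi> p) * \<psi> p) * (cnj (\<psi> q) * \<phi> q))"
    by (rule sl_swap3[symmetric])
  also have "\<dots> = (\<Sum>\<psi>\<leftarrow>vs. of_real ((cmod (ip n \<phi> \<psi>))\<^sup>2))"
  proof (rule arg_cong[where f=sum_list], rule map_cong[OF refl])
    fix \<psi>
    have "cnj (ip n \<phi> \<psi>) = (\<Sum>q\<in>R n. cnj (\<psi> q) * \<phi> q)" unfolding ip_def by (simp add: cnj_sum mult.commute)
    then show "(\<Sum>p\<in>R n. \<Sum>q\<in>R n. (cnj (\<phi> p) * \<psi> p) * (cnj (\<psi> q) * \<phi> q)) = of_real ((cmod (ip n \<phi> \<psi>))\<^sup>2)"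
      unfolding complex_norm_square by (simp add: sum_product ip_def)
  qed
  finally have Q: "quad n \<phi> \<sigma> = (\<Sum>\<psi>\<leftarrow>vs. of_real ((cmod (ip n \<phi> \<psi>))\<^sup>2))" .
  have "tr (2^n) (2^n) \<sigma> = (\<Sum>i<2^n. \<Sum>j<2^n. \<Sum>\<psi>\<leftarrow>vs. \<psi> (i, j) * cnj (\<psi> (i, j)))"
    unfolding tr_def by (intro sum.cong refl) (simp add: vs(2))
  also have "\<dots> = (\<Sum>\<psi>\<leftarrow>vs. \<Sum>i<2^n. \<Sum>j<2^n. \<psi> (i, j) * cnj (\<psi> (i, j)))"
    by (rule sl_swap3[symmetric])
  also have "\<dots> = (\<Sum>\<psi>\<leftarrow>vs. of_real (nrm n \<psi>))"
    unfolding nrm_def of_real_sum complex_norm_square ..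
  finally show ?thesis using Q vs(1) by blast
qed

lemma sl_of_real: "(\<Sum>\<psi>\<leftarrow>vs. complex_of_real (f \<psi>)) = of_real (\<Sum>\<psi>\<leftarrow>vs. f \<psi>)"
  by (induction vs) simp_all

lemma sl_nonneg: "(\<And>\<psi>. f \<psi> \<ge> (0::real)) \<Longrightarrow> (\<Sum>\<psi>\<leftarrow>vs. f \<psi>) \<ge> 0"
  by (induction vs) (simp_all add: add_nonneg_nonneg)

lemma sl_mono: "(\<And>\<psi>. \<psi> \<in> set vs \<Longrightarrow> f \<psi> \<le> (g \<psi>::real)) \<Longrightarrow> (\<Sum>\<psi>\<leftarrow>vs. f \<psi>) \<le> (\<Sum>\<psi>\<leftarrow>vs. g \<psi>)"
  by (induction vs) (simp_all add: add_mono)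

lemma quad_nonneg: assumes "good r (2^n) (2^n) \<sigma>" shows "Re (quad n \<phi> \<sigma>) \<ge> 0"
proof -
  obtain vs where "quad n \<phi> \<sigma> = (\<Sum>\<psi>\<leftarrow>vs. of_real ((cmod (ip n \<phi> \<psi>))\<^sup>2))"
    using good_decomp[OF assms] by blast
  then have "Re (quad n \<phi> \<sigma>) = (\<Sum>\<psi>\<leftarrow>vs. (cmod (ip n \<phi> \<psi>))\<^sup>2)"
    by (simp only: sl_of_real Re_complex_of_real)
  then show ?thesis by (simp add: sl_nonneg)
qed

lemma ip_bell00: "ip n (bell n 0 0) \<psi> = (\<Sum>x<2^n. \<psi> (x, x)) / sN n"
proof -
  have "ip n (bell n 0 0) \<psi> = (\<Sum>x<2^n. \<Sum>y<2^n. cnj (bell n 0 0 (x, y)) * \<psi> (x, y))"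
    unfolding ip_def by (simp add: sum_R)
  also have "\<dots> = (\<Sum>x<2^n. \<psi> (x, x) / sN n)"
  proof (intro sum.cong refl)
    fix x :: nat assume x: "x \<in> {..<2^n}"
    have "cnj (bell n 0 0 (x, y)) * \<psi> (x, y) = (if y = x then \<psi> (x, x) / sN n else 0)" if "y < 2^n" for y
      using x that by (auto simp: bell_formula)
    then have "(\<Sum>y<2^n. cnj (bell n 0 0 (x, y)) * \<psi> (x, y)) = (\<Sum>y<2^n. if y = x then \<psi> (x, x) / sN n else 0)"
      by (intro sum.cong refl) auto
    also have "\<dots> = \<psi> (x, x) / sN n" using x by simp
    finally show "(\<Sum>y<2^n. cnj (bell n 0 0 (x, y)) * \<psi> (x, y)) = \<psi> (x, x) / sN n" .
  qed
  also have "\<dots> = (\<Sum>x<2^n. \<psi> (x, x)) / sN n" by (simp add: sum_divide_distrib)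
  finally show ?thesis .
qed

lemma fid_state: assumes "good r (2^n) (2^n) \<sigma>"
  shows "Re (quad n (bell n 0 0) \<sigma>) \<le> real r / 2^n * Re (tr (2^n) (2^n) \<sigma>)"
proof -
  obtain vs where vs: "\<forall>\<psi>\<in>set vs. schmidt_rank_le r (2^n) (2^n) \<psi>"
    "quad n (bell n 0 0) \<sigma> = (\<Sum>\<psi>\<leftarrow>vs. of_real ((cmod (ip n (bell n 0 0) \<psi>))\<^sup>2))"
    "tr (2^n) (2^n) \<sigma> = (\<Sum>\<psi>\<leftarrow>vs. of_real (nrm n \<psi>))"
    using good_decomp[OF assms] by blast
  have each: "(cmod (ip n (bell n 0 0) \<psi>))\<^sup>2 \<le> real r / 2^n * nrm n \<psi>" if "\<psi> \<in> set vs" for \<psi>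
  proof -
    have s: "(cmod (sN n))\<^sup>2 = 2^n" by simp
    have "(cmod (ip n (bell n 0 0) \<psi>))\<^sup>2 = (cmod (\<Sum>x<2^n. \<psi> (x, x)))\<^sup>2 / 2^n"
      by (simp add: ip_bell00 norm_divide power_divide s)
    also have "\<dots> \<le> real r * nrm n \<psi> / 2^n"
      using fid[OF vs(1)[rule_format, OF that]] unfolding nrm_def by (simp add: divide_right_mono)
    finally show ?thesis by simp
  qed
  have "Re (quad n (bell n 0 0) \<sigma>) = (\<Sum>\<psi>\<leftarrow>vs. (cmod (ip n (bell n 0 0) \<psi>))\<^sup>2)"
    using vs(2) by (simp only: sl_of_real Re_complex_of_real)
  also have "\<dots> \<le> (\<Sum>\<psi>\<leftarrow>vs. real r / 2^n * nrm n \<psi>)" by (rule sl_mono) (rule each)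
  also have "\<dots> = real r / 2^n * (\<Sum>\<psi>\<leftarrow>vs. nrm n \<psi>)" by (rule sl_mult)
  also have "\<dots> = real r / 2^n * Re (tr (2^n) (2^n) \<sigma>)" using vs(3) by (simp only: sl_of_real Re_complex_of_real)
  finally show ?thesis .
qed

lemma quad_all: "(\<Sum>a<2^n. \<Sum>b<2^n. quad n (bell n a b) \<sigma>) = tr (2^n) (2^n) \<sigma>"
proof -
  have "(\<Sum>a<2^n. \<Sum>b<2^n. quad n (bell n a b) \<sigma>) =
      (\<Sum>a<2^n. \<Sum>b<2^n. \<Sum>p\<in>R n. \<Sum>q\<in>R n. \<sigma> p q * (bell n a b q * cnj (bell n a b p)))"
    unfolding quad_def by (intro sum.cong refl) (simp add: ac_simps)
  also have "\<dots> = (\<Sum>p\<in>R n. \<Sum>q\<in>R n. \<Sum>a<2^n. \<Sum>b<2^n. \<sigma> p q * (bell n a b q * cnj (bell n a b p)))"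
    by (rule swap4)
  also have "\<dots> = (\<Sum>p\<in>R n. \<Sum>q\<in>R n. \<sigma> p q * (if q = p then 1 else 0))"
    by (intro sum.cong refl) (simp add: sum_distrib_left[symmetric] bell_compl)
  also have "\<dots> = (\<Sum>p\<in>R n. \<sigma> p p)"
  proof (intro sum.cong refl)
    fix p assume p: "p \<in> R n"
    have "(\<Sum>q\<in>R n. \<sigma> p q * (if q = p then 1 else 0)) = (\<Sum>q\<in>R n. if q = p then \<sigma> p p else 0)"
      by (intro sum.cong) auto
    also have "\<dots> = \<sigma> p p" using p by simp
    finally show "(\<Sum>q\<in>R n. \<sigma> p q * (if q = p then 1 else 0)) = \<sigma> p p" .
  qed
  also have "\<dots> = tr (2^n) (2^n) \<sigma>" unfolding tr_def sum_R ..
  finally show ?thesis .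
qed




lemma sum_divmod: "(\<Sum>i<N * (d::nat). g i) = (\<Sum>x<N. \<Sum>a<d. g (x * d + a))"
proof (induction N)
  case 0 then show ?case by simp
next
  case (Suc N)
  have "(\<Sum>i<Suc N * d. g i) = (\<Sum>i<N * d. g i) + (\<Sum>i\<in>{N * d..<N * d + d}. g i)"
    by (simp add: add.commute sum.atLeastLessThan_concat[symmetric] lessThan_atLeast0 sum.atLeastLessThan_concat)
  also have "(\<Sum>i\<in>{N * d..<N * d + d}. g i) = (\<Sum>a<d. g (N * d + a))"
    by (rule sum.reindex_bij_witness[of _ "\<lambda>a. N * d + a" "\<lambda>i. i - N * d"]) auto
  finally show ?case using Suc by simp
qed

lemma attach_tr: "tr (2^n * dEA) (2^n * dEB) (attach n dEA dEB \<omega> \<rho>) = tr (2^n) (2^n) \<rho> * tr dEA dEB \<omega>"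
proof -
  have "tr (2^n * dEA) (2^n * dEB) (attach n dEA dEB \<omega> \<rho>) =
     (\<Sum>x<2^n. \<Sum>a<dEA. \<Sum>y<2^n. \<Sum>b<dEB. \<rho> (x, y) (x, y) * \<omega> (a, b) (a, b))"
  proof -
    have "tr (2^n * dEA) (2^n * dEB) (attach n dEA dEB \<omega> \<rho>) =
       (\<Sum>x<2^n. \<Sum>a<dEA. \<Sum>y<2^n. \<Sum>b<dEB. attach n dEA dEB \<omega> \<rho> (x * dEA + a, y * dEB + b) (x * dEA + a, y * dEB + b))"
      unfolding tr_def sum_divmod ..
    also have "\<dots> = (\<Sum>x<2^n. \<Sum>a<dEA. \<Sum>y<2^n. \<Sum>b<dEB. \<rho> (x, y) (x, y) * \<omega> (a, b) (a, b))"
    proof (intro sum.cong refl)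
      fix x a y b assume "x \<in> {..<(2::nat)^n}" "a \<in> {..<dEA}" "y \<in> {..<(2::nat)^n}" "b \<in> {..<dEB}"
      then have r: "x < 2^n" "a < dEA" "y < 2^n" "b < dEB" by auto
      have l1: "x * dEA + a < 2^n * dEA"
      proof -
        have "x * dEA + a < x * dEA + dEA" using r by simp
        also have "\<dots> = (x + 1) * dEA" by simp
        also have "\<dots> \<le> 2^n * dEA" using r by (intro mult_right_mono) auto
        finally show ?thesis .
      qed
      have l2: "y * dEB + b < 2^n * dEB"
      proof -
        have "y * dEB + b < y * dEB + dEB" using r by simp
        also have "\<dots> = (y + 1) * dEB" by simp
        also have "\<dots> \<le> 2^n * dEB" using r by (intro mult_right_mono) auto
        finally show ?thesis .
      qed
      show "attach n dEA dEB \<omega> \<rho> (x * dEA + a, y * dEB + b) (x * dEA + a, y * dEB + b) = \<rho> (x, y) (x, y) * \<omega> (a, b) (a, b)"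
        unfolding attach_def using l1 l2 r by simp
    qed
    finally show ?thesis .
  qed
  also have "\<dots> = tr (2^n) (2^n) \<rho> * tr dEA dEB \<omega>"
    unfolding tr_def by (simp add: sum_product)
  finally show ?thesis .
qed

lemma attach_sum: "finite S \<Longrightarrow> attach n dEA dEB \<omega> (\<lambda>p q. \<Sum>i\<in>S. f i p q) = (\<lambda>p q. \<Sum>i\<in>S. attach n dEA dEB \<omega> (f i) p q)"
  unfolding attach_def by (auto simp: fun_eq_iff sum_distrib_right)

lemma attach_mult: "attach n dEA dEB \<omega> (\<lambda>p q. c * \<rho> p q) = (\<lambda>p q. c * attach n dEA dEB \<omega> \<rho> p q)"
  unfolding attach_def by (auto simp: fun_eq_iff ac_simps)

lemma resource_tr: assumes "resource_state e dEA dEB \<omega>" shows "tr dEA dEB \<omega> = 1"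
proof -
  obtain J and w :: "nat \<Rightarrow> real" and \<psi> where R0: "(\<forall>j<J. w j \<ge> 0) \<and> (\<Sum>j<J. w j) = 1 \<and>
    (\<forall>j<J. (\<Sum>x<dEA. \<Sum>y<dEB. (cmod (\<psi> j (x, y)))\<^sup>2) = 1 \<and> schmidt_rank_le (2^e) dEA dEB (\<psi> j)) \<and>
    (\<forall>p q. \<omega> p q = (\<Sum>j<J. complex_of_real (w j) * proj (\<psi> j) p q))"
    using assms unfolding resource_state_def by blast
  note R = R0[THEN conjunct1] R0[THEN conjunct2, THEN conjunct1] R0[THEN conjunct2, THEN conjunct2, THEN conjunct1]
    R0[THEN conjunct2, THEN conjunct2, THEN conjunct2]
  have "tr dEA dEB \<omega> = (\<Sum>x<dEA. \<Sum>y<dEB. \<Sum>j<J. complex_of_real (w j) * (\<psi> j (x, y) * cnj (\<psi> j (x, y))))"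
    unfolding tr_def using R(4) by (simp add: proj_def)
  also have "\<dots> = (\<Sum>j<J. \<Sum>x<dEA. \<Sum>y<dEB. complex_of_real (w j) * (\<psi> j (x, y) * cnj (\<psi> j (x, y))))"
    by (rule swap3[symmetric])
  also have "\<dots> = (\<Sum>j<J. complex_of_real (w j) * (\<Sum>x<dEA. \<Sum>y<dEB. \<psi> j (x, y) * cnj (\<psi> j (x, y))))"
    by (simp only: sum_distrib_left)
  also have "\<dots> = (\<Sum>j<J. complex_of_real (w j) * of_real (\<Sum>x<dEA. \<Sum>y<dEB. (cmod (\<psi> j (x, y)))\<^sup>2))"
    unfolding of_real_sum complex_norm_square ..
  also have "\<dots> = (\<Sum>j<J. complex_of_real (w j))" using R(3) by (intro sum.cong refl) simp
  also have "\<dots> = 1" unfolding of_real_sum[symmetric] R(2) by simp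
  finally show ?thesis .
qed


lemma rank_triv: "schmidt_rank_le d1 d1 d2 \<psi>"
  unfolding schmidt_rank_le_def
proof (intro exI allI impI)
  fix x y assume "x < d1" "y < d2"
  have "(\<Sum>l<d1. (if l = x then 1 else 0) * \<psi> (l, y)) = (\<Sum>l<d1. if l = x then \<psi> (x, y) else 0)"
    by (intro sum.cong) auto
  also have "\<dots> = \<psi> (x, y)" using \<open>x < d1\<close> by simp
  finally show "\<psi> (x, y) = (\<Sum>l<d1. (\<lambda>l x. if l = x then 1 else 0) l x * (\<lambda>l y. \<psi> (l, y)) l y)" by simp
qed

lemma div_lt: "i < N * d \<Longrightarrow> i div d < (N::nat)"
  by (simp add: less_mult_imp_div_less mult.commute)

lemma mod_lt: "i < N * d \<Longrightarrow> i mod d < (d::nat)"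
  by (cases "d = 0") auto

definition avec :: "nat \<Rightarrow> nat \<Rightarrow> bvec \<Rightarrow> real \<Rightarrow> bvec \<Rightarrow> bvec" where
  "avec dEA dEB \<alpha> wt \<psi> = (\<lambda>(i, j). \<alpha> (i div dEA, j div dEB) * complex_of_real (sqrt wt) * \<psi> (i mod dEA, j mod dEB))"

lemma attach_decomp: assumes "\<forall>p q. \<omega> p q = (\<Sum>t<J. complex_of_real (w t) * proj (\<psi> t) p q)"
  and "\<forall>t<J. w t \<ge> 0"
  and "i < 2^n * dEA" "j < 2^n * dEB" "i' < 2^n * dEA" "j' < 2^n * dEB"
  shows "attach n dEA dEB \<omega> (proj \<alpha>) (i, j) (i', j') =
     (\<Sum>\<phi>\<leftarrow>map (\<lambda>t. avec dEA dEB \<alpha> (w t) (\<psi> t)) [0..<J]. \<phi> (i, j) * cnj (\<phi> (i', j')))"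
proof -
  have "(\<Sum>\<phi>\<leftarrow>map (\<lambda>t. avec dEA dEB \<alpha> (w t) (\<psi> t)) [0..<J]. \<phi> (i, j) * cnj (\<phi> (i', j'))) =
     (\<Sum>t<J. avec dEA dEB \<alpha> (w t) (\<psi> t) (i, j) * cnj (avec dEA dEB \<alpha> (w t) (\<psi> t) (i', j')))"
    by (simp add: sum_list_distinct_conv_sum_set atLeast0LessThan comp_def)
  also have "\<dots> = (\<Sum>t<J. \<alpha> (i div dEA, j div dEB) * cnj (\<alpha> (i' div dEA, j' div dEB)) *
      (complex_of_real (w t) * (\<psi> t (i mod dEA, j mod dEB) * cnj (\<psi> t (i' mod dEA, j' mod dEB)))))"
  proof (intro sum.cong refl)
    fix t assume "t \<in> {..<J}"
    then have w: "w t \<ge> 0" using assms(2) by auto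
    have s: "complex_of_real (sqrt (w t)) * complex_of_real (sqrt (w t)) = complex_of_real (w t)"
    proof -
      have "sqrt (w t) * sqrt (w t) = w t" using w by simp
      then show ?thesis by (simp only: of_real_mult[symmetric])
    qed
    show "avec dEA dEB \<alpha> (w t) (\<psi> t) (i, j) * cnj (avec dEA dEB \<alpha> (w t) (\<psi> t) (i', j')) =
      \<alpha> (i div dEA, j div dEB) * cnj (\<alpha> (i' div dEA, j' div dEB)) *
      (complex_of_real (w t) * (\<psi> t (i mod dEA, j mod dEB) * cnj (\<psi> t (i' mod dEA, j' mod dEB))))"
    proof -
      have g: "A * S * C * cnj (B * S * D) = A * cnj B * (S * S * (C * cnj D))" if "cnj S = S" for A B C D S :: complex
        using that by (simp add: ac_simps)
      show ?thesis unfolding avec_def by (simp only: split g[OF complex_cnj_complex_of_real] s)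
    qed
  qed
  also have "\<dots> = attach n dEA dEB \<omega> (proj \<alpha>) (i, j) (i', j')"
  proof -
    have "attach n dEA dEB \<omega> (proj \<alpha>) (i, j) (i', j') = proj \<alpha> (i div dEA, j div dEB) (i' div dEA, j' div dEB) *
       \<omega> (i mod dEA, j mod dEB) (i' mod dEA, j' mod dEB)"
      unfolding attach_def using assms(3-6) by simp
    then show ?thesis by (simp only: assms(1)[rule_format] proj_def sum_distrib_left)
  qed
  finally show ?thesis by simp
qed

lemma resource_parts: assumes "resource_state e dEA dEB \<omega>"
  obtains J :: nat and w :: "nat \<Rightarrow> real" and \<psi> :: "nat \<Rightarrow> bvec" where "\<forall>t<J. w t \<ge> 0" "\<forall>t<J. schmidt_rank_le (2^e) dEA dEB (\<psi> t)"
    "\<forall>p q. \<omega> p q = (\<Sum>t<J. complex_of_real (w t) * proj (\<psi> t) p q)"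
proof -
  obtain J and w :: "nat \<Rightarrow> real" and \<psi> where R0: "(\<forall>j<J. w j \<ge> 0) \<and> (\<Sum>j<J. w j) = 1 \<and>
    (\<forall>j<J. (\<Sum>x<dEA. \<Sum>y<dEB. (cmod (\<psi> j (x, y)))\<^sup>2) = 1 \<and> schmidt_rank_le (2^e) dEA dEB (\<psi> j)) \<and>
    (\<forall>p q. \<omega> p q = (\<Sum>j<J. complex_of_real (w j) * proj (\<psi> j) p q))"
    using assms unfolding resource_state_def by blast
  then show ?thesis using that by blast
qed

lemma attach_good_any: assumes "resource_state e dEA dEB \<omega>"
  shows "good (2^n * dEA) (2^n * dEA) (2^n * dEB) (attach n dEA dEB \<omega> (proj \<alpha>))"
proof -
  obtain J :: nat and w :: "nat \<Rightarrow> real" and \<psi> :: "nat \<Rightarrow> bvec" where R: "\<forall>t<J. w t \<ge> 0" "\<forall>t<J. schmidt_rank_le (2^e) dEA dEB (\<psi> t)"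
    "\<forall>p q. \<omega> p q = (\<Sum>t<J. complex_of_real (w t) * proj (\<psi> t) p q)"
    by (rule resource_parts[OF assms])
  show ?thesis unfolding good_def
  proof (rule exI[of _ "map (\<lambda>t. avec dEA dEB \<alpha> (w t) (\<psi> t)) [0..<J]"], intro conjI allI impI)
    show "\<forall>\<psi>\<in>set (map (\<lambda>t. avec dEA dEB \<alpha> (w t) (\<psi> t)) [0..<J]). schmidt_rank_le (2^n * dEA) (2^n * dEA) (2^n * dEB) \<psi>"
      using rank_triv by blast
  next
    fix i j i' j' assume "i < 2^n * dEA" "j < 2^n * dEB" "i' < 2^n * dEA" "j' < 2^n * dEB"
    then show "attach n dEA dEB \<omega> (proj \<alpha>) (i, j) (i', j') =
     (\<Sum>\<phi>\<leftarrow>map (\<lambda>t. avec dEA dEB \<alpha> (w t) (\<psi> t)) [0..<J]. \<phi> (i, j) * cnj (\<phi> (i', j')))"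
      by (rule attach_decomp[OF R(3) R(1)])
  qed
qed

lemma attach_good_prod: assumes "resource_state e dEA dEB \<omega>"
  and ab: "\<forall>x<2^n. \<forall>y<2^n. \<alpha> (x, y) = a x * b y"
  shows "good (2^e) (2^n * dEA) (2^n * dEB) (attach n dEA dEB \<omega> (proj \<alpha>))"
proof -
  obtain J :: nat and w :: "nat \<Rightarrow> real" and \<psi> :: "nat \<Rightarrow> bvec" where R: "\<forall>t<J. w t \<ge> 0" "\<forall>t<J. schmidt_rank_le (2^e) dEA dEB (\<psi> t)"
    "\<forall>p q. \<omega> p q = (\<Sum>t<J. complex_of_real (w t) * proj (\<psi> t) p q)"
    by (rule resource_parts[OF assms(1)])
  have rk: "schmidt_rank_le (2^e) (2^n * dEA) (2^n * dEB) (avec dEA dEB \<alpha> (w t) (\<psi> t))" if tJ: "t < J" for t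
  proof -
    obtain u v where uv: "\<forall>x<dEA. \<forall>y<dEB. \<psi> t (x, y) = (\<Sum>l<(2::nat)^e. u l x * v l y)"
      using R(2) tJ unfolding schmidt_rank_le_def by blast
    have "avec dEA dEB \<alpha> (w t) (\<psi> t) (i, j) =
       (\<Sum>l<(2::nat)^e. (a (i div dEA) * complex_of_real (sqrt (w t)) * u l (i mod dEA)) * (b (j div dEB) * v l (j mod dEB)))"
      if "i < 2^n * dEA" "j < 2^n * dEB" for i j
    proof -
      have "avec dEA dEB \<alpha> (w t) (\<psi> t) (i, j) = a (i div dEA) * b (j div dEB) * complex_of_real (sqrt (w t)) *
         (\<Sum>l<(2::nat)^e. u l (i mod dEA) * v l (j mod dEB))"
      proof -
        have e1: "\<alpha> (i div dEA, j div dEB) = a (i div dEA) * b (j div dEB)"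
          using ab div_lt[OF that(1)] div_lt[OF that(2)] by blast
        have e2: "\<psi> t (i mod dEA, j mod dEB) = (\<Sum>l<(2::nat)^e. u l (i mod dEA) * v l (j mod dEB))"
          using uv mod_lt[OF that(1)] mod_lt[OF that(2)] by blast
        show ?thesis unfolding avec_def by (simp only: split e1 e2)
      qed
      also have "\<dots> = (\<Sum>l<(2::nat)^e. (a (i div dEA) * complex_of_real (sqrt (w t)) * u l (i mod dEA)) * (b (j div dEB) * v l (j mod dEB)))"
        by (simp add: sum_distrib_left ac_simps)
      finally show ?thesis .
    qed
    then show ?thesis unfolding schmidt_rank_le_def
      by (intro exI[of _ "\<lambda>l i. a (i div dEA) * complex_of_real (sqrt (w t)) * u l (i mod dEA)"]
          exI[of _ "\<lambda>l j. b (j div dEB) * v l (j mod dEB)"]) simp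
  qed
  show ?thesis unfolding good_def
  proof (rule exI[of _ "map (\<lambda>t. avec dEA dEB \<alpha> (w t) (\<psi> t)) [0..<J]"], intro conjI allI impI ballI)
    fix \<phi> assume "\<phi> \<in> set (map (\<lambda>t. avec dEA dEB \<alpha> (w t) (\<psi> t)) [0..<J])"
    then obtain t where "t < J" "\<phi> = avec dEA dEB \<alpha> (w t) (\<psi> t)" by auto
    then show "schmidt_rank_le (2^e) (2^n * dEA) (2^n * dEB) \<phi>" using rk by blast
  next
    fix i j i' j' assume "i < 2^n * dEA" "j < 2^n * dEB" "i' < 2^n * dEA" "j' < 2^n * dEB"
    then show "attach n dEA dEB \<omega> (proj \<alpha>) (i, j) (i', j') =
     (\<Sum>\<phi>\<leftarrow>map (\<lambda>t. avec dEA dEB \<alpha> (w t) (\<psi> t)) [0..<J]. \<phi> (i, j) * cnj (\<phi> (i', j')))"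
      by (rule attach_decomp[OF R(3) R(1)])
  qed
qed




lemma nm_arith:
  fixes r0 s0 r1 s1 \<epsilon> :: real and d :: "bool \<Rightarrow> bool \<Rightarrow> real"
  assumes "r0 \<ge> 0" "s0 \<ge> 0" "r1 \<ge> 0" "s1 \<ge> 0" "r0 + s0 = 1" "r1 + s1 = 1" "r1 \<le> \<epsilon>"
    and d: "d False False = r0" "d False True = s0" "d True False = r1" "d True True = s1"
  shows "\<exists>p D. 0 \<le> p \<and> p \<le> 1 \<and> is_dist D \<and>
     (\<forall>m. stat_dist (d m) (\<lambda>x. p * (if x = m then 1 else 0) + (1 - p) * D x) \<le> \<epsilon>)"
proof (cases "r1 \<le> r0")
  case True
  define p where "p = r0 - r1"
  define D where "D x = (if s0 + r1 = 0 then (if x then 0 else 1) else (if x then s0 / (s0 + r1) else r1 / (s0 + r1)))" for x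
  have p1: "1 - p = s0 + r1" unfolding p_def using assms by simp
  have "is_dist D" unfolding is_dist_def D_def using assms by (auto simp: add_divide_distrib[symmetric])
  moreover have "stat_dist (d m) (\<lambda>x. p * (if x = m then 1 else 0) + (1 - p) * D x) = 0" for m
  proof (cases "s0 + r1 = 0")
    case True
    then have "s0 = 0" "r1 = 0" using assms by auto
    then show ?thesis using assms p1 unfolding stat_dist_def D_def p_def by (cases m) auto
  next
    case False
    have a: "(1 - p) * D False = r1" "(1 - p) * D True = s0" unfolding p1 D_def using False by auto
    have "p = r0 - r1" by (simp add: p_def)
    then show ?thesis using assms a unfolding stat_dist_def by (cases m) auto
  qed
  moreover have "0 \<le> p" "p \<le> 1" using True assms unfolding p_def by auto
  ultimately show ?thesis using assms by (intro exI[of _ p] exI[of _ D]) auto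
next
  case False
  define D where "D x = (if x then s0 else r0)" for x
  have "is_dist D" unfolding is_dist_def D_def using assms by auto
  moreover have "stat_dist (d m) (\<lambda>x. 0 * (if x = m then 1 else 0) + (1 - 0) * D x) \<le> \<epsilon>" for m
    using assms False unfolding stat_dist_def D_def by (cases m) auto
  ultimately show ?thesis by (intro exI[of _ "0::real"] exI[of _ D]) auto
qed


definition ev :: "nat \<times> nat \<Rightarrow> bvec" where "ev i = (\<lambda>p. if p = i then 1 else 0)"

lemma tr_proj: "tr (2^n) (2^n) (proj \<psi>) = ip n \<psi> \<psi>"
  unfolding tr_def proj_def ip_def sum_R by (simp add: mult.commute)

lemma tr_div: "tr d1 d2 (\<lambda>p q. \<sigma> p q / c) = tr d1 d2 \<sigma> / c"
  unfolding tr_def by (simp add: sum_divide_distrib)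

lemma enc1_sum: "enc n True = (\<lambda>p q. (\<Sum>i\<in>nz_pairs n. proj (bell n (fst i) (snd i)) p q) / of_nat (card (nz_pairs n)))"
  unfolding enc_def by (simp add: case_prod_beta)

lemma nz_R: "nz_pairs n = R n - {(0, 0)}" unfolding nz_pairs_def R_def ..

lemma card_R: "card (R n) = 2^n * 2^n" unfolding R_def by (simp add: card_cartesian_product)

lemma card_nz: "card (nz_pairs n) = 2^n * 2^n - 1"
  unfolding nz_R by (simp add: card_R R_def)

lemma sum_R_nz: "(\<Sum>i\<in>R n. f i) = f (0, 0) + (\<Sum>i\<in>nz_pairs n. f i)"
  unfolding nz_R by (rule sum.remove) (auto simp: R_def)

lemma tr_enc: assumes "n \<ge> 1" shows "tr (2^n) (2^n) (enc n m) = 1"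
proof (cases m)
  case True
  have "tr (2^n) (2^n) (enc n True) = (\<Sum>i\<in>nz_pairs n. tr (2^n) (2^n) (proj (bell n (fst i) (snd i)))) / of_nat (card (nz_pairs n))"
    unfolding enc1_sum tr_div tr_sum ..
  also have "\<dots> = (\<Sum>i\<in>nz_pairs n. 1) / of_nat (card (nz_pairs n))"
  proof -
    have "tr (2^n) (2^n) (proj (bell n (fst i) (snd i))) = 1" if "i \<in> nz_pairs n" for i
      using that by (cases i) (simp add: tr_proj ip_bell nz_mem)
    then show ?thesis by simp
  qed
  also have "\<dots> = 1" using card_nz_pos[OF assms] by (simp add: card_gt_0_iff)
  finally show ?thesis using True by simp
next
  case False
  then show ?thesis by (simp add: enc_def epr_bell tr_proj ip_bell)
qed

lemma sumP_sumE: "(\<lambda>p q. \<Sum>i\<in>R n. proj (bell n (fst i) (snd i)) p q) = (\<lambda>p q. \<Sum>i\<in>R n. proj (ev i) p q)"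
proof (intro ext)
  fix p q :: "nat \<times> nat"
  have E: "(\<Sum>i\<in>R n. proj (ev i) p q) = (if p = q \<and> p \<in> R n then 1 else 0)"
  proof -
    have "(\<Sum>i\<in>R n. proj (ev i) p q) = (\<Sum>i\<in>R n. if i = p then (if p = q then 1 else 0) else 0)"
      by (intro sum.cong refl) (auto simp: proj_def ev_def)
    also have "\<dots> = (if p = q \<and> p \<in> R n then 1 else 0)" by (simp add: sum.delta')
    finally show ?thesis .
  qed
  have z: "bell n a b r = 0" if "r \<notin> R n" for a b r
    using that by (cases r) (auto simp: bell_formula R_def)
  have P: "(\<Sum>i\<in>R n. proj (bell n (fst i) (snd i)) p q) = (if p = q \<and> p \<in> R n then 1 else 0)"
  proof (cases "p \<in> R n \<and> q \<in> R n")
    case True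
    have "(\<Sum>i\<in>R n. proj (bell n (fst i) (snd i)) p q) = (\<Sum>a<2^n. \<Sum>b<2^n. bell n a b p * cnj (bell n a b q))"
      unfolding sum_R proj_def by simp
    also have "\<dots> = (if p = q then 1 else 0)" using True by (simp add: bell_compl)
    finally show ?thesis using True by simp
  next
    case False
    have h: "bell n (fst i) (snd i) p * cnj (bell n (fst i) (snd i) q) = 0" for i
      using False z[of p "fst i" "snd i"] z[of q "fst i" "snd i"] by auto
    have "(\<Sum>i\<in>R n. proj (bell n (fst i) (snd i)) p q) = 0" unfolding proj_def
      by (rule sum.neutral) (use h in blast)
    then show ?thesis using False by auto
  qed
  show "(\<Sum>i\<in>R n. proj (bell n (fst i) (snd i)) p q) = (\<Sum>i\<in>R n. proj (ev i) p q)" using E P by simp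
qed




lemma frac_bound: fixes X K :: real assumes "X \<ge> 2" "K \<ge> 0"
  shows "X * K / (X * X - 1) \<le> 2 * K / X"
proof -
  have "X * X \<ge> 2 * 2" using assms by (intro mult_mono) auto
  then have h1: "X * X - 1 > 0" by simp
  have "2 * K \<le> K * (X * X)" using \<open>X * X \<ge> 2 * 2\<close> assms(2)
    by (metis mult.commute mult_left_mono order_trans le_add_same_cancel1 mult_2 zero_le_numeral
        numeral_le_iff semiring_norm(69) semiring_norm(72) mult_2_right)
  then have h2: "X * K * X \<le> 2 * K * (X * X - 1)" by (simp add: algebra_simps)
  have X0: "X > 0" using assms by simp
  show ?thesis using h1 h2 X0 by (simp add: divide_le_eq le_divide_eq field_simps)
qed

lemma main_bounds:
  assumes n1: "n \<ge> 1" and RS: "resource_state e dEA dEB \<omega>"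
    and L: "locc (2^n * dEA) (2^n * dEB) (2^n) (2^n) \<Phi>"
  defines "\<Lambda> \<equiv> \<lambda>\<rho>. \<Phi> (attach n dEA dEB \<omega> \<rho>)"
  shows "\<forall>m. 0 \<le> dec_dist n (\<Lambda> (enc n m)) False \<and> 0 \<le> dec_dist n (\<Lambda> (enc n m)) True \<and>
             dec_dist n (\<Lambda> (enc n m)) False + dec_dist n (\<Lambda> (enc n m)) True = 1"
    and "dec_dist n (\<Lambda> (enc n True)) False \<le> 2 powr (1 + real e - real n)"
proof -
  have lin: "lin_map \<Phi>" by (rule locc_lin[OF L])
  have Lsum: "\<Lambda> (\<lambda>p q. \<Sum>i\<in>S. f i p q) = (\<lambda>p q. \<Sum>i\<in>S. \<Lambda> (f i) p q)" if "finite S" for S and f :: "'x \<Rightarrow> bop"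
    unfolding \<Lambda>_def attach_sum[OF that] lin_sum[OF lin that] ..
  have Ldiv: "\<Lambda> (\<lambda>p q. \<sigma> p q / c) = (\<lambda>p q. \<Lambda> \<sigma> p q / c)" for \<sigma> c
  proof -
    have e: "(\<lambda>p q. \<sigma> p q / c) = (\<lambda>p q. inverse c * \<sigma> p q)" by (simp add: field_simps)
    have "\<Phi> (\<lambda>p q. inverse c * attach n dEA dEB \<omega> \<sigma> p q) = (\<lambda>p q. inverse c * \<Phi> (attach n dEA dEB \<omega> \<sigma>) p q)"
      using lin unfolding lin_map_def by blast
    then show ?thesis unfolding \<Lambda>_def e attach_mult by (simp add: field_simps)
  qed
  have Ltr: "tr (2^n) (2^n) (\<Lambda> \<rho>) = tr (2^n) (2^n) \<rho>" for \<rho>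
    unfolding \<Lambda>_def locc_tr[OF L] attach_tr resource_tr[OF RS] by simp
  have Lpos: "0 \<le> Re (quad n \<phi> (\<Lambda> (proj \<alpha>)))" for \<phi> \<alpha>
    unfolding \<Lambda>_def by (rule quad_nonneg, rule locc_good[OF L], rule attach_good_any[OF RS])
  have Lfid: "Re (quad n (bell n 0 0) (\<Lambda> (proj (ev i)))) \<le> 2^e / 2^n" if i: "i \<in> R n" for i
  proof -
    obtain x y where xy: "i = (x, y)" by (cases i) auto
    have g: "good (2^e) (2^n) (2^n) (\<Lambda> (proj (ev i)))"
      unfolding \<Lambda>_def
      by (rule locc_good[OF L], rule attach_good_prod[OF RS, where a="\<lambda>x'. if x' = x then 1 else 0" and b="\<lambda>y'. if y' = y then 1 else 0"])
         (auto simp: ev_def xy)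
    have t: "tr (2^n) (2^n) (proj (ev i)) = 1"
    proof -
      have "ip n (ev i) (ev i) = (\<Sum>p\<in>R n. if p = i then 1 else 0)"
        unfolding ip_def ev_def by (intro sum.cong refl) auto
      then show ?thesis using i by (simp add: tr_proj)
    qed
    show ?thesis using fid_state[OF g] Ltr t by simp
  qed
  define c where "c = card (nz_pairs n)"
  have c0: "c > 0" unfolding c_def by (rule card_nz_pos[OF n1])
  define P where "P i = proj (bell n (fst i) (snd i))" for i
  have enc1: "\<Lambda> (enc n True) = (\<lambda>p q. (\<Sum>i\<in>nz_pairs n. \<Lambda> (P i) p q) / of_nat c)"
    unfolding enc1_sum Ldiv Lsum[OF finite_nz] P_def c_def ..
  have q1: "Re (quad n \<phi> (\<Lambda> (enc n True))) = (\<Sum>i\<in>nz_pairs n. Re (quad n \<phi> (\<Lambda> (P i)))) / c" for \<phi>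
    unfolding enc1 quad_div quad_sum by simp
  have enc0: "enc n False = P (0, 0)" unfolding P_def enc_def epr_bell by simp
  have pos: "0 \<le> bellprob n (\<Lambda> (enc n m)) a b" for m a b
  proof (cases m)
    case True
    have "0 \<le> (\<Sum>i\<in>nz_pairs n. Re (quad n (bell n a b) (\<Lambda> (P i)))) / c"
      using Lpos c0 unfolding P_def by (intro divide_nonneg_pos sum_nonneg) auto
    then show ?thesis using True q1 by (simp add: bellprob_quad)
  next
    case False
    then show ?thesis using Lpos by (simp add: bellprob_quad enc0 P_def)
  qed
  show "\<forall>m. 0 \<le> dec_dist n (\<Lambda> (enc n m)) False \<and> 0 \<le> dec_dist n (\<Lambda> (enc n m)) True \<and>
             dec_dist n (\<Lambda> (enc n m)) False + dec_dist n (\<Lambda> (enc n m)) True = 1"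
  proof (intro allI conjI)
    fix m
    show "0 \<le> dec_dist n (\<Lambda> (enc n m)) False" using pos by (simp add: dec_dist_def)
    show "0 \<le> dec_dist n (\<Lambda> (enc n m)) True" using pos unfolding dec_dist_def
      by (simp add: sum_nonneg case_prod_beta)
    have "dec_dist n (\<Lambda> (enc n m)) False + dec_dist n (\<Lambda> (enc n m)) True =
        (\<Sum>i\<in>R n. bellprob n (\<Lambda> (enc n m)) (fst i) (snd i))"
      unfolding dec_dist_def sum_R_nz by (simp add: case_prod_beta)
    also have "\<dots> = Re (\<Sum>a<2^n. \<Sum>b<2^n. quad n (bell n a b) (\<Lambda> (enc n m)))"
      unfolding sum_R bellprob_quad by simp
    also have "\<dots> = 1" unfolding quad_all Ltr tr_enc[OF n1] by simp
    finally show "dec_dist n (\<Lambda> (enc n m)) False + dec_dist n (\<Lambda> (enc n m)) True = 1" .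
  qed
  define G where "G i = Re (quad n (bell n 0 0) (\<Lambda> (P i)))" for i
  have G0: "G i \<ge> 0" for i unfolding G_def P_def by (rule Lpos)
  have "(\<Sum>i\<in>R n. G i) = Re (quad n (bell n 0 0) (\<Lambda> (\<lambda>p q. \<Sum>i\<in>R n. P i p q)))"
    unfolding G_def Lsum[OF finite_R] quad_sum by simp
  also have "\<dots> = Re (quad n (bell n 0 0) (\<Lambda> (\<lambda>p q. \<Sum>i\<in>R n. proj (ev i) p q)))"
    unfolding P_def sumP_sumE ..
  also have "\<dots> = (\<Sum>i\<in>R n. Re (quad n (bell n 0 0) (\<Lambda> (proj (ev i)))))"
    unfolding Lsum[OF finite_R] quad_sum by simp
  also have "\<dots> \<le> (\<Sum>i\<in>R n. 2^e / 2^n)" by (rule sum_mono) (rule Lfid)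
  also have "\<dots> = 2^n * 2^e" by (simp add: card_R)
  finally have sumG: "(\<Sum>i\<in>R n. G i) \<le> 2^n * 2^e" .
  have "(\<Sum>i\<in>nz_pairs n. G i) \<le> 2^n * 2^e"
    using sumG G0[of "(0,0)"] unfolding sum_R_nz by simp
  then have r1: "dec_dist n (\<Lambda> (enc n True)) False \<le> 2^n * 2^e / c"
    using q1[of "bell n 0 0"] c0 unfolding dec_dist_def bellprob_quad G_def
    by (simp add: divide_right_mono)
  have N2: "(2::real)^n \<ge> 2" using n1
    by (metis power_one_right power_increasing one_le_numeral)
  have cN: "real c = 2^n * 2^n - 1"
  proof -
    have "(1::nat) \<le> 2^n * 2^n" by (simp add: one_le_mult_iff)
    then show ?thesis unfolding c_def card_nz by (simp add: of_nat_diff)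
  qed
  have "2^n * 2^e / real c \<le> 2 * 2^e / 2^n"
    unfolding cN by (rule frac_bound[OF N2]) simp
  also have "\<dots> = 2 powr (1 + real e - real n)"
    by (simp add: powr_add powr_diff powr_realpow)
  finally show "dec_dist n (\<Lambda> (enc n True)) False \<le> 2 powr (1 + real e - real n)"
    using r1 by simp
qed



theorem theorem6p1:
  fixes n e :: nat
  assumes "n \<ge> 1"
  shows "perfectly_correct n \<and> non_malleable n (LOCC2 n e) (2 powr (1 + real e - real n))"
proof
  show "perfectly_correct n" by (rule correct[OF assms])
  show "non_malleable n (LOCC2 n e) (2 powr (1 + real e - real n))"
    unfolding non_malleable_def
  proof
    fix \<Lambda> assume "\<Lambda> \<in> LOCC2 n e"
    then obtain dEA dEB \<omega> \<Phi> where RS: "resource_state e dEA dEB \<omega>"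
      and L: "locc (2^n * dEA) (2^n * dEB) (2^n) (2^n) \<Phi>"
      and Ld: "\<Lambda> = (\<lambda>\<rho>. \<Phi> (attach n dEA dEB \<omega> \<rho>))"
      unfolding LOCC2_def by blast
    note mb = main_bounds[OF assms RS L]
    define d where "d m = dec_dist n (\<Lambda> (enc n m))" for m
    have "\<exists>p D. 0 \<le> p \<and> p \<le> 1 \<and> is_dist D \<and>
       (\<forall>m. stat_dist (d m) (\<lambda>x. p * (if x = m then 1 else 0) + (1 - p) * D x) \<le> 2 powr (1 + real e - real n))"
      by (rule nm_arith) (use mb(1) mb(2) in \<open>auto simp: d_def Ld\<close>)
    then show "\<exists>p D. 0 \<le> p \<and> p \<le> 1 \<and> is_dist D \<and>
       (\<forall>m. stat_dist (dec_dist n (\<Lambda> (enc n m))) (\<lambda>x. p * (if x = m then 1 else 0) + (1 - p) * D x)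
            \<le> 2 powr (1 + real e - real n))" unfolding d_def .
  qed
qed


end
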